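(* Let $M$ be a smooth $n$-manifold with a torsion-free linear connection $\nabla$ and a symmetric $(0,2)$-tensor field $c$, and let $\widetilde{\nabla}$ be the linear connection on $T^{\ast}M$ given in the adapted frame by $\widetilde{\nabla}_{E_{\overline{i}}}E_{\overline{j}}=0$, $\widetilde{\nabla}_{E_{\overline{i}}}E_{j}=0$, $\widetilde{\nabla}_{E_{i}}E_{\overline{j}}=-\Gamma^{j}_{ih}E_{\overline{h}}$, $\widetilde{\nabla}_{E_{i}}E_{j}=\Gamma^{h}_{ij}E_{h}+\tfrac12(\nabla_i c_{jh}+\nabla_j c_{ih}-\nabla_h c_{ij})E_{\overline{h}}$. Assume that $$\nabla_i(\nabla_kc_{jh}-\nabla_hc_{jk})-\nabla_j(\nabla_kc_{ih}-\nabla_hc_{ik})-R_{ijk}^{\ \ \ m}c_{mh}-R_{ijh}^{\ \ \ m}c_{km}=0$$ for all indices. Then $T^{\ast}M$ is semi-symmetric with respect to $\widetilde\nabla$ if and only if $M$ is semi-symmetric with respect to $\nabla$.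
   Context: Summation convention; $\overline{i}=n+i$. $\Gamma^h_{ij}$ are the coefficients of $\nabla$ in local coordinates $(x^i)$; the curvature of $\nabla$ is $R(X,Y)=\nabla_X\nabla_Y-\nabla_Y\nabla_X-\nabla_{[X,Y]}$ with $R(\partial_i,\partial_j)\partial_k=R_{ijk}^{\ \ \ h}\partial_h$; $\nabla_ic_{jk}$ and $\nabla_i(\nabla_kc_{jh})$ are the components of $\nabla c$ and $\nabla\nabla c$. On $T^{\ast}M$ use induced coordinates $(x^i,p_i)$, $\partial_{\overline i}=\partial/\partial p_i$, and the adapted frame $E_j=\partial_j+p_a\Gamma^a_{hj}\partial_{\overline h}$, $E_{\overline j}=\partial_{\overline j}$. (The connection $\widetilde\nabla$ is the metric connection of the modified Riemannian extension $\overline{g}_{\nabla,c}$ — $\overline{g}_{\nabla,c}(E_i,E_j)=c_{ij}$, $\overline{g}_{\nabla,c}(E_i,E_{\overline j})=\delta_i^j$, $\overline{g}_{\nabla,c}(E_{\overline i},E_{\overline j})=0$ — with torsion $\widetilde T(E_i,E_j)=-p_sR_{ijr}^{\ \ \ s}E_{\overline r}$, other adapted torsion components zero.) For a linear connection $D$ on a manifold $N$ with curvature $K(X,Y)=D_XD_Y-D_YD_X-D_{[X,Y]}$, let $K(X,Y)$ act on tensor fields as a derivation (annihilating functions, commuting with contractions, acting on vector fields as $K(X,Y)$); $N$ is semi-symmetric with respect to $D$ if $(K(X,Y)\cdot K)(Z,W)U=0$ for all vector fields $X,Y,Z,W,U$, where $(K(X,Y)\cdot K)(Z,W)U=K(X,Y)(K(Z,W)U)-K(K(X,Y)Z,W)U-K(Z,K(X,Y)W)U-K(Z,W)K(X,Y)U$.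 *)

theory Defs
  imports "HOL-Analysis.Analysis"
begin

text \<open>Local-coordinate model. A chart domain of the n-manifold M is an open set
  U of real^'n (n = CARD('n)); T*U is U \<times> UNIV with induced coordinates (x,p).\<close>

coinductive cinf_on :: "'a::euclidean_space set \<Rightarrow> ('a \<Rightarrow> 'b::euclidean_space) \<Rightarrow> bool"
  for S where
  "f differentiable_on S \<Longrightarrow> (\<And>v. cinf_on S (\<lambda>x. frechet_derivative f (at x) v)) \<Longrightarrow> cinf_on S f"

definition lie :: "('a::euclidean_space \<Rightarrow> 'a) \<Rightarrow> ('a \<Rightarrow> 'a) \<Rightarrow> 'a \<Rightarrow> 'a" where
  "lie X Y = (\<lambda>q. frechet_derivative Y (at q) (X q) - frechet_derivative X (at q) (Y q))"

definition curv ::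
  "(('a::euclidean_space \<Rightarrow> 'a) \<Rightarrow> ('a \<Rightarrow> 'a) \<Rightarrow> ('a \<Rightarrow> 'a))
     \<Rightarrow> ('a \<Rightarrow> 'a) \<Rightarrow> ('a \<Rightarrow> 'a) \<Rightarrow> ('a \<Rightarrow> 'a) \<Rightarrow> ('a \<Rightarrow> 'a)" where
  "curv D X Y Z = (\<lambda>q. D X (D Y Z) q - D Y (D X Z) q - D (lie X Y) Z q)"

definition curv_dot_curv ::
  "(('a::euclidean_space \<Rightarrow> 'a) \<Rightarrow> ('a \<Rightarrow> 'a) \<Rightarrow> ('a \<Rightarrow> 'a))
     \<Rightarrow> ('a \<Rightarrow> 'a) \<Rightarrow> ('a \<Rightarrow> 'a) \<Rightarrow> ('a \<Rightarrow> 'a) \<Rightarrow> ('a \<Rightarrow> 'a) \<Rightarrow> ('a \<Rightarrow> 'a) \<Rightarrow> ('a \<Rightarrow> 'a)" where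
  "curv_dot_curv D X Y Z W U = (\<lambda>q.
      curv D X Y (curv D Z W U) q - curv D (curv D X Y Z) W U q
    - curv D Z (curv D X Y W) U q - curv D Z W (curv D X Y U) q)"

definition semi_symmetric ::
  "(('a::euclidean_space \<Rightarrow> 'a) \<Rightarrow> ('a \<Rightarrow> 'a) \<Rightarrow> ('a \<Rightarrow> 'a)) \<Rightarrow> 'a set \<Rightarrow> bool" where
  "semi_symmetric D S \<longleftrightarrow>
     (\<forall>X Y Z W U. cinf_on S X \<and> cinf_on S Y \<and> cinf_on S Z \<and> cinf_on S W \<and> cinf_on S U \<longrightarrow>
        (\<forall>q\<in>S. curv_dot_curv D X Y Z W U q = 0))"

text \<open>Base connection with coefficients Gam h i j = Gamma^h_ij, i.e. nabla_{d_i} d_j = Gamma^h_ij d_h.\<close>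
definition base_conn :: "('n::finite \<Rightarrow> 'n \<Rightarrow> 'n \<Rightarrow> real^'n \<Rightarrow> real)
    \<Rightarrow> (real^'n \<Rightarrow> real^'n) \<Rightarrow> (real^'n \<Rightarrow> real^'n) \<Rightarrow> real^'n \<Rightarrow> real^'n" where
  "base_conn Gam X Y = (\<lambda>x. frechet_derivative Y (at x) (X x)
      + (\<chi> h. \<Sum>i\<in>UNIV. \<Sum>j\<in>UNIV. X x $ i * Y x $ j * Gam h i j x))"

definition pd :: "'n::finite \<Rightarrow> (real^'n \<Rightarrow> real) \<Rightarrow> real^'n \<Rightarrow> real" where
  "pd i f x = frechet_derivative f (at x) (axis i 1)"

definition Rc :: "('n::finite \<Rightarrow> 'n \<Rightarrow> 'n \<Rightarrow> real^'n \<Rightarrow> real) \<Rightarrow> 'n \<Rightarrow> 'n \<Rightarrow> 'n \<Rightarrow> 'n \<Rightarrow> real^'n \<Rightarrow> real" where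
  "Rc Gam i j k h x =
     curv (base_conn Gam) (\<lambda>_. axis i 1) (\<lambda>_. axis j 1) (\<lambda>_. axis k 1) x $ h"

definition cov_c :: "('n::finite \<Rightarrow> 'n \<Rightarrow> 'n \<Rightarrow> real^'n \<Rightarrow> real) \<Rightarrow> ('n \<Rightarrow> 'n \<Rightarrow> real^'n \<Rightarrow> real)
    \<Rightarrow> 'n \<Rightarrow> 'n \<Rightarrow> 'n \<Rightarrow> real^'n \<Rightarrow> real" where
  "cov_c Gam c i j k x = pd i (c j k) x
     - (\<Sum>m\<in>UNIV. Gam m i j x * c m k x) - (\<Sum>m\<in>UNIV. Gam m i k x * c j m x)"

definition cov2_c :: "('n::finite \<Rightarrow> 'n \<Rightarrow> 'n \<Rightarrow> real^'n \<Rightarrow> real) \<Rightarrow> ('n \<Rightarrow> 'n \<Rightarrow> real^'n \<Rightarrow> real)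
    \<Rightarrow> 'n \<Rightarrow> 'n \<Rightarrow> 'n \<Rightarrow> 'n \<Rightarrow> real^'n \<Rightarrow> real" where
  "cov2_c Gam c i k j h x = pd i (cov_c Gam c k j h) x
     - (\<Sum>m\<in>UNIV. Gam m i k x * cov_c Gam c m j h x)
     - (\<Sum>m\<in>UNIV. Gam m i j x * cov_c Gam c k m h x)
     - (\<Sum>m\<in>UNIV. Gam m i h x * cov_c Gam c k j m x)"

text \<open>Adapted frame on T*U at q = (x,p): E_j = d_j + p_a Gamma^a_{hj} d_{bar h}, E_{bar j} = d_{bar j}.\<close>
definition Eh :: "('n::finite \<Rightarrow> 'n \<Rightarrow> 'n \<Rightarrow> real^'n \<Rightarrow> real) \<Rightarrow> 'n \<Rightarrow> (real^'n) \<times> (real^'n) \<Rightarrow> (real^'n) \<times> (real^'n)" where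
  "Eh Gam j q = (axis j 1, \<chi> h. \<Sum>a\<in>UNIV. snd q $ a * Gam a h j (fst q))"

definition Ev :: "'n::finite \<Rightarrow> (real^'n) \<times> (real^'n) \<Rightarrow> (real^'n) \<times> (real^'n)" where
  "Ev j q = (0, axis j 1)"

text \<open>Components of a vector field on T*U with respect to the adapted frame.\<close>
definition hcomp :: "((real^'n::finite) \<times> (real^'n) \<Rightarrow> (real^'n) \<times> (real^'n)) \<Rightarrow> 'n \<Rightarrow> (real^'n) \<times> (real^'n) \<Rightarrow> real" where
  "hcomp Y j q = fst (Y q) $ j"

definition vcomp :: "('n::finite \<Rightarrow> 'n \<Rightarrow> 'n \<Rightarrow> real^'n \<Rightarrow> real)
    \<Rightarrow> ((real^'n) \<times> (real^'n) \<Rightarrow> (real^'n) \<times> (real^'n)) \<Rightarrow> 'n \<Rightarrow> (real^'n) \<times> (real^'n) \<Rightarrow> real" where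
  "vcomp Gam Y j q = snd (Y q) $ j
      - (\<Sum>a\<in>UNIV. \<Sum>h\<in>UNIV. snd q $ a * Gam a j h (fst q) * fst (Y q) $ h)"

text \<open>The connection tilde-nabla on T*U, defined from its values on the adapted frame
  (extended by the Leibniz rule and tensoriality in the lower slot):
  tn_{E_bar i} E_bar j = 0, tn_{E_bar i} E_j = 0, tn_{E_i} E_bar j = - Gamma^j_{ih} E_bar h,
  tn_{E_i} E_j = Gamma^h_ij E_h + 1/2 (nabla_i c_jh + nabla_j c_ih - nabla_h c_ij) E_bar h.\<close>
definition cot_conn :: "('n::finite \<Rightarrow> 'n \<Rightarrow> 'n \<Rightarrow> real^'n \<Rightarrow> real) \<Rightarrow> ('n \<Rightarrow> 'n \<Rightarrow> real^'n \<Rightarrow> real)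
    \<Rightarrow> ((real^'n) \<times> (real^'n) \<Rightarrow> (real^'n) \<times> (real^'n)) \<Rightarrow> ((real^'n) \<times> (real^'n) \<Rightarrow> (real^'n) \<times> (real^'n))
    \<Rightarrow> (real^'n) \<times> (real^'n) \<Rightarrow> (real^'n) \<times> (real^'n)" where
  "cot_conn Gam c X Y = (\<lambda>q.
      (\<Sum>j\<in>UNIV. frechet_derivative (hcomp Y j) (at q) (X q) *\<^sub>R Eh Gam j q)
    + (\<Sum>j\<in>UNIV. frechet_derivative (vcomp Gam Y j) (at q) (X q) *\<^sub>R Ev j q)
    + (\<Sum>i\<in>UNIV. \<Sum>j\<in>UNIV. (hcomp X i q * vcomp Gam Y j q) *\<^sub>R
          (\<Sum>h\<in>UNIV. (- Gam j i h (fst q)) *\<^sub>R Ev h q))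
    + (\<Sum>i\<in>UNIV. \<Sum>j\<in>UNIV. (hcomp X i q * hcomp Y j q) *\<^sub>R
          ((\<Sum>h\<in>UNIV. Gam h i j (fst q) *\<^sub>R Eh Gam h q)
         + (\<Sum>h\<in>UNIV. ((cov_c Gam c i j h (fst q) + cov_c Gam c j i h (fst q)
                         - cov_c Gam c h i j (fst q)) / 2) *\<^sub>R Ev h q))))"

end

theory Submission
  imports Defs
begin

abbreviation fd :: "('a::real_normed_vector \<Rightarrow> 'b::real_normed_vector) \<Rightarrow> 'a \<Rightarrow> 'a \<Rightarrow> 'b" where
  "fd f x \<equiv> frechet_derivative f (at x)"

lemma fd_local:
  assumes "open S" "q \<in> S" "\<And>x. x \<in> S \<Longrightarrow> f x = g x"
  shows "fd f q = fd g q"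
proof -
  have "\<And>f'. (f has_derivative f') (at q) \<longleftrightarrow> (g has_derivative f') (at q)"
    using has_derivative_transform_within_open[of f _ q UNIV S g]
      has_derivative_transform_within_open[of g _ q UNIV S f] assms by auto
  then show ?thesis unfolding frechet_derivative_def by simp
qed

lemma differentiable_on_agree:
  assumes "open S" "f differentiable_on S" "\<And>x. x \<in> S \<Longrightarrow> f x = g x"
  shows "g differentiable_on S"
  using assms unfolding differentiable_on_eq_differentiable_at[OF assms(1)] differentiable_def
  by (meson has_derivative_transform_within_open)

lemma cinf_diff: "cinf_on S f \<Longrightarrow> f differentiable_on S"
  by (erule cinf_on.cases) simp

lemma cinf_dir: "cinf_on S f \<Longrightarrow> cinf_on S (\<lambda>x. fd f x v)"
  by (erule cinf_on.cases) simp

lemma cinf_hasd: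
  assumes "open S" "cinf_on S f" "x \<in> S"
  shows "(f has_derivative fd f x) (at x)"
  using cinf_diff[OF assms(2)] assms differentiable_on_eq_differentiable_at frechet_derivative_works
  by blast

lemma cinf_coind:
  assumes "open S" "P f"
    and step: "\<And>g. P g \<Longrightarrow> g differentiable_on S \<and>
        (\<forall>v. \<exists>g'. (P g' \<or> cinf_on S g') \<and> (\<forall>x\<in>S. fd g x v = g' x))"
  shows "cinf_on S f"
proof -
  let ?X = "\<lambda>h. \<exists>g. (P g \<or> cinf_on S g) \<and> (\<forall>x\<in>S. h x = g x)"
  have "?X f" using assms by blast
  then show ?thesis
  proof (rule cinf_on.coinduct[of ?X])
    fix h assume "?X h"
    then obtain g where g: "P g \<or> cinf_on S g" "\<forall>x\<in>S. h x = g x" by blast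
    have gd: "g differentiable_on S" using g step cinf_diff by blast
    have hd: "h differentiable_on S"
      using differentiable_on_agree[OF assms(1) gd] g(2) by metis
    have fdeq: "\<And>x. x \<in> S \<Longrightarrow> fd h x = fd g x"
      using fd_local[OF assms(1)] g(2) by metis
    have "\<forall>v. ?X (\<lambda>x. fd h x v)"
    proof
      fix v
      show "?X (\<lambda>x. fd h x v)"
      proof (cases "P g")
        case True
        then obtain g' where "(P g' \<or> cinf_on S g')" "\<forall>x\<in>S. fd g x v = g' x"
          using step by blast
        then show ?thesis using fdeq by auto
      next
        case False
        then have "cinf_on S g" using g by blast
        then have "cinf_on S (\<lambda>x. fd g x v)" by (rule cinf_dir)
        then show ?thesis using fdeq by (intro exI[of _ "\<lambda>x. fd g x v"]) auto
      qed
    qed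
    then show "\<exists>f. h = f \<and> f differentiable_on S \<and> (\<forall>v. ?X (\<lambda>x. fd f x v) \<or> cinf_on S (\<lambda>x. fd f x v))"
      using hd by blast
  qed
qed

lemma cinf_cong:
  assumes "open S" "cinf_on S f" "\<And>x. x \<in> S \<Longrightarrow> f x = g x"
  shows "cinf_on S g"
proof -
  have "cinf_on S f \<and> (\<forall>x\<in>S. g x = f x)" using assms by auto
  then have "(\<lambda>h. \<exists>f. cinf_on S f \<and> (\<forall>x\<in>S. h x = f x)) g" by blast
  then show ?thesis
  proof (rule cinf_coind[OF assms(1)])
    fix h assume "\<exists>f. cinf_on S f \<and> (\<forall>x\<in>S. h x = f x)"
    then obtain f where f: "cinf_on S f" "\<forall>x\<in>S. h x = f x" by blast
    have "h differentiable_on S"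
      using differentiable_on_agree[OF assms(1) cinf_diff[OF f(1)]] f(2) by metis
    moreover have "\<forall>v. \<exists>g'. ((\<exists>f. cinf_on S f \<and> (\<forall>x\<in>S. g' x = f x)) \<or> cinf_on S g') \<and> (\<forall>x\<in>S. fd h x v = g' x)"
    proof
      fix v
      have "\<forall>x\<in>S. fd h x v = fd f x v" using fd_local[OF assms(1)] f(2) by metis
      then show "\<exists>g'. ((\<exists>f. cinf_on S f \<and> (\<forall>x\<in>S. g' x = f x)) \<or> cinf_on S g') \<and> (\<forall>x\<in>S. fd h x v = g' x)"
        using cinf_dir[OF f(1)] by blast
    qed
    ultimately show "h differentiable_on S \<and> (\<forall>v. \<exists>g'. ((\<exists>f. cinf_on S f \<and> (\<forall>x\<in>S. g' x = f x)) \<or> cinf_on S g') \<and> (\<forall>x\<in>S. fd h x v = g' x))" by blast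
  qed
qed

lemma cinf_const: "open (S::'a::euclidean_space set) \<Longrightarrow> cinf_on S (\<lambda>x. c::'b::euclidean_space)"
proof -
  assume S: "open S"
  show ?thesis
  proof (rule cinf_coind[OF S, where P="\<lambda>g::'a\<Rightarrow>'b. \<exists>c. g = (\<lambda>x. c)"])
    fix g :: "'a\<Rightarrow>'b" assume "\<exists>c. g = (\<lambda>x. c)"
    then obtain c where "g = (\<lambda>x. c)" by blast
    then show "g differentiable_on S \<and> (\<forall>v. \<exists>g'. ((\<exists>c. g' = (\<lambda>x. c)) \<or> cinf_on S g') \<and> (\<forall>x\<in>S. fd g x v = g' x))"
      by (auto intro!: exI[of _ "\<lambda>x. 0"])
  qed auto
qed

lemma cinf_add:
  assumes S: "open S" and f: "cinf_on S f" and g: "cinf_on S g"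
  shows "cinf_on S (\<lambda>x. f x + g x)"
proof (rule cinf_coind[OF S, where P="\<lambda>h. \<exists>f g. cinf_on S f \<and> cinf_on S g \<and> h = (\<lambda>x. f x + g x)"])
  show "\<exists>f' g'. cinf_on S f' \<and> cinf_on S g' \<and> (\<lambda>x. f x + g x) = (\<lambda>x. f' x + g' x)" using f g by blast
next
  fix h assume "\<exists>f g. cinf_on S f \<and> cinf_on S g \<and> h = (\<lambda>x. f x + g x)"
  then obtain f g where fg: "cinf_on S f" "cinf_on S g" "h = (\<lambda>x. f x + g x)" by blast
  have "h differentiable_on S" using fg cinf_diff differentiable_on_add by blast
  moreover have "\<forall>v. \<exists>g'. ((\<exists>f g. cinf_on S f \<and> cinf_on S g \<and> g' = (\<lambda>x. f x + g x)) \<or> cinf_on S g') \<and> (\<forall>x\<in>S. fd h x v = g' x)"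
  proof
    fix v
    have "\<forall>x\<in>S. fd h x v = fd f x v + fd g x v"
    proof
      fix x assume x: "x \<in> S"
      have "(h has_derivative (\<lambda>v. fd f x v + fd g x v)) (at x)"
        unfolding fg(3) by (rule has_derivative_add[OF cinf_hasd[OF S fg(1) x] cinf_hasd[OF S fg(2) x]])
      from frechet_derivative_at[OF this, symmetric] show "fd h x v = fd f x v + fd g x v" by simp
    qed
    then show "\<exists>g'. ((\<exists>f g. cinf_on S f \<and> cinf_on S g \<and> g' = (\<lambda>x. f x + g x)) \<or> cinf_on S g') \<and> (\<forall>x\<in>S. fd h x v = g' x)"
      using fg cinf_dir by blast
  qed
  ultimately show "h differentiable_on S \<and> (\<forall>v. \<exists>g'. ((\<exists>f g. cinf_on S f \<and> cinf_on S g \<and> g' = (\<lambda>x. f x + g x)) \<or> cinf_on S g') \<and> (\<forall>x\<in>S. fd h x v = g' x))" by blast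
qed

inductive prodsum :: "'a::euclidean_space set \<Rightarrow> ('a \<Rightarrow> 'b::euclidean_space) \<Rightarrow> bool" for S where
  ps_base: "cinf_on S f \<Longrightarrow> cinf_on S g \<Longrightarrow> prodsum S (\<lambda>x. (f x::real) *\<^sub>R g x)"
| ps_add: "prodsum S a \<Longrightarrow> prodsum S b \<Longrightarrow> prodsum S (\<lambda>x. a x + b x)"

lemma prodsum_step:
  assumes S: "open S" and "prodsum S h"
  shows "h differentiable_on S \<and> (\<forall>v. \<exists>g'. prodsum S g' \<and> (\<forall>x\<in>S. fd h x v = g' x))"
  using assms(2)
proof induction
  case (ps_base f g)
  have "(\<lambda>x. f x *\<^sub>R g x) differentiable_on S"
    using cinf_diff[OF ps_base(1)] cinf_diff[OF ps_base(2)] by (rule differentiable_on_scaleR)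
  moreover {
    fix v
    let ?g' = "\<lambda>x. f x *\<^sub>R fd g x v + fd f x v *\<^sub>R g x"
    have "\<forall>x\<in>S. fd (\<lambda>x. f x *\<^sub>R g x) x v = ?g' x"
    proof
      fix x assume x: "x \<in> S"
      have "((\<lambda>x. f x *\<^sub>R g x) has_derivative (\<lambda>v. f x *\<^sub>R fd g x v + fd f x v *\<^sub>R g x)) (at x)"
        by (rule has_derivative_scaleR[OF cinf_hasd[OF S ps_base(1) x] cinf_hasd[OF S ps_base(2) x]])
      from frechet_derivative_at[OF this, symmetric] show "fd (\<lambda>x. f x *\<^sub>R g x) x v = ?g' x" by simp
    qed
    moreover have "prodsum S ?g'"
      by (intro prodsum.intros cinf_dir ps_base)
    ultimately have "\<exists>g'. prodsum S g' \<and> (\<forall>x\<in>S. fd (\<lambda>x. f x *\<^sub>R g x) x v = g' x)" by blast }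
  ultimately show ?case by blast
next
  case (ps_add a b)
  have "(\<lambda>x. a x + b x) differentiable_on S" using ps_add by (intro differentiable_on_add) auto
  moreover {
    fix v
    obtain a' where a': "prodsum S a'" "\<forall>x\<in>S. fd a x v = a' x" using ps_add by blast
    obtain b' where b': "prodsum S b'" "\<forall>x\<in>S. fd b x v = b' x" using ps_add by blast
    have "\<forall>x\<in>S. fd (\<lambda>x. a x + b x) x v = a' x + b' x"
    proof
      fix x assume x: "x \<in> S"
      have "a differentiable at x" "b differentiable at x"
        using ps_add x differentiable_on_eq_differentiable_at[OF S] by blast+
      then have "(a has_derivative fd a x) (at x)" "(b has_derivative fd b x) (at x)"
        by (simp_all add: frechet_derivative_works)
      then have "((\<lambda>x. a x + b x) has_derivative (\<lambda>v. fd a x v + fd b x v)) (at x)"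
        by (rule has_derivative_add)
      then have e: "fd (\<lambda>x. a x + b x) x = (\<lambda>v. fd a x v + fd b x v)" by (rule frechet_derivative_at[symmetric])
      have "fd (\<lambda>x. a x + b x) x v = fd a x v + fd b x v" by (simp only: e)
      also have "\<dots> = a' x + b' x" using a'(2) b'(2) x by simp
      finally show "fd (\<lambda>x. a x + b x) x v = a' x + b' x" .
    qed
    then have "\<exists>g'. prodsum S g' \<and> (\<forall>x\<in>S. fd (\<lambda>x. a x + b x) x v = g' x)"
      using prodsum.ps_add[OF a'(1) b'(1)] by (intro exI[of _ "\<lambda>x. a' x + b' x"] conjI) }
  ultimately show ?case by blast
qed

lemma prodsum_cinf:
  assumes S: "open S" and "prodsum S h"
  shows "cinf_on S h"
  using assms(2)
proof (rule cinf_coind[OF S])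
  fix g assume "prodsum S g"
  from prodsum_step[OF S this] show "g differentiable_on S \<and> (\<forall>v. \<exists>g'. (prodsum S g' \<or> cinf_on S g') \<and> (\<forall>x\<in>S. fd g x v = g' x))"
    by blast
qed

lemma cinf_scaleR:
  assumes S: "open S" and f: "cinf_on S (f::_\<Rightarrow>real)" and g: "cinf_on S g"
  shows "cinf_on S (\<lambda>x. f x *\<^sub>R g x)"
  by (rule prodsum_cinf[OF S]) (rule ps_base[OF f g])

lemma cinf_mult:
  assumes S: "open S" and f: "cinf_on S (f::_\<Rightarrow>real)" and g: "cinf_on S g"
  shows "cinf_on S (\<lambda>x. f x * g x)"
  using cinf_scaleR[OF S f g] by simp

lemma cinf_linear_comp:
  assumes S: "open S" and f: "cinf_on S f" and L: "linear L"
  shows "cinf_on S (\<lambda>x. L (f x))"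
proof (rule cinf_coind[OF S, where P="\<lambda>h. \<exists>f. cinf_on S f \<and> h = (\<lambda>x. L (f x))"])
  fix h assume "\<exists>f. cinf_on S f \<and> h = (\<lambda>x. L (f x))"
  then obtain f where f: "cinf_on S f" and h: "h = (\<lambda>x. L (f x))" by blast
  have bl: "bounded_linear L" using L linear_conv_bounded_linear by blast
  have hd: "\<And>x. x \<in> S \<Longrightarrow> (h has_derivative (\<lambda>v. L (fd f x v))) (at x)"
    unfolding h using bounded_linear.has_derivative[OF bl] cinf_hasd[OF S f] by blast
  have "h differentiable_on S" using hd differentiable_on_eq_differentiable_at[OF S] differentiable_def by blast
  moreover have "\<forall>v. \<exists>g'. ((\<exists>f. cinf_on S f \<and> g' = (\<lambda>x. L (f x))) \<or> cinf_on S g') \<and> (\<forall>x\<in>S. fd h x v = g' x)"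
  proof
    fix v
    have "\<exists>f'. cinf_on S f' \<and> (\<lambda>x. L (fd f x v)) = (\<lambda>x. L (f' x))" using cinf_dir[OF f] by blast
    moreover have "\<forall>x\<in>S. fd h x v = L (fd f x v)"
      using frechet_derivative_at[OF hd, symmetric] by simp
    ultimately show "\<exists>g'. ((\<exists>f. cinf_on S f \<and> g' = (\<lambda>x. L (f x))) \<or> cinf_on S g') \<and> (\<forall>x\<in>S. fd h x v = g' x)"
      by blast
  qed
  ultimately show "h differentiable_on S \<and> (\<forall>v. \<exists>g'. ((\<exists>f. cinf_on S f \<and> g' = (\<lambda>x. L (f x))) \<or> cinf_on S g') \<and> (\<forall>x\<in>S. fd h x v = g' x))"
    by blast
qed (use f in blast)

lemma cinf_comp_linear:
  assumes S: "open S" and T: "open T" and g: "cinf_on S g" and L: "linear L" and LT: "\<And>x. x \<in> T \<Longrightarrow> L x \<in> S"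
  shows "cinf_on T (\<lambda>x. g (L x))"
proof (rule cinf_coind[OF T, where P="\<lambda>h. \<exists>g. cinf_on S g \<and> h = (\<lambda>x. g (L x))"])
  fix h assume "\<exists>g. cinf_on S g \<and> h = (\<lambda>x. g (L x))"
  then obtain g where g: "cinf_on S g" and h: "h = (\<lambda>x. g (L x))" by blast
  have bl: "bounded_linear L" using L linear_conv_bounded_linear by blast
  have hd: "\<And>x. x \<in> T \<Longrightarrow> (h has_derivative (\<lambda>v. fd g (L x) (L v))) (at x)"
    unfolding h using diff_chain_at[OF bounded_linear.has_derivative[OF bl has_derivative_ident] cinf_hasd[OF S g LT]]
    by (simp add: o_def)
  have "h differentiable_on T" using hd differentiable_on_eq_differentiable_at[OF T] differentiable_def by blast
  moreover have "\<forall>v. \<exists>g'. ((\<exists>g. cinf_on S g \<and> g' = (\<lambda>x. g (L x))) \<or> cinf_on T g') \<and> (\<forall>x\<in>T. fd h x v = g' x)"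
  proof
    fix v
    have "\<exists>g'. cinf_on S g' \<and> (\<lambda>x. fd g (L x) (L v)) = (\<lambda>x. g' (L x))" using cinf_dir[OF g] by blast
    moreover have "\<forall>x\<in>T. fd h x v = fd g (L x) (L v)"
      using frechet_derivative_at[OF hd, symmetric] by simp
    ultimately show "\<exists>g'. ((\<exists>g. cinf_on S g \<and> g' = (\<lambda>x. g (L x))) \<or> cinf_on T g') \<and> (\<forall>x\<in>T. fd h x v = g' x)"
      by blast
  qed
  ultimately show "h differentiable_on T \<and> (\<forall>v. \<exists>g'. ((\<exists>g. cinf_on S g \<and> g' = (\<lambda>x. g (L x))) \<or> cinf_on T g') \<and> (\<forall>x\<in>T. fd h x v = g' x))"
    by blast
qed (use g in blast)

lemma cinf_sum:
  assumes S: "open S" and "\<And>i. i \<in> I \<Longrightarrow> cinf_on S (f i)"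
  shows "cinf_on S (\<lambda>x. \<Sum>i\<in>I. f i x)"
proof (cases "finite I")
  case True
  then show ?thesis using assms(2)
    by (induction I rule: finite_induct) (auto intro: cinf_const[OF S] cinf_add[OF S])
qed (simp add: cinf_const[OF S])

lemma cinf_minus:
  assumes S: "open S" and f: "cinf_on S f" and g: "cinf_on S g"
  shows "cinf_on S (\<lambda>x. f x - g x)"
proof -
  have "cinf_on S (\<lambda>x. f x + (-1::real) *\<^sub>R g x)"
    by (intro cinf_add cinf_scaleR cinf_const S f g)
  then show ?thesis by simp
qed

lemma cinf_inner:
  assumes S: "open S" and f: "cinf_on S f"
  shows "cinf_on S (\<lambda>x. f x \<bullet> b)"
  using cinf_linear_comp[OF S f, of "\<lambda>y. y \<bullet> b"] by (simp add: bounded_linear.linear[OF bounded_linear_inner_left])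

lemma cinf_components:
  assumes S: "open S" and f: "\<And>b. b \<in> Basis \<Longrightarrow> cinf_on S (\<lambda>x. f x \<bullet> b)"
  shows "cinf_on S f"
proof -
  have "cinf_on S (\<lambda>x. \<Sum>b\<in>Basis. (f x \<bullet> b) *\<^sub>R b)"
    by (intro cinf_sum cinf_scaleR cinf_const S f)
  then show ?thesis by (simp add: euclidean_representation)
qed

lemma line_chain:
  assumes "(f has_derivative f') (at (a + s *\<^sub>R w))"
  shows "((\<lambda>s. f (a + s *\<^sub>R w)) has_derivative (\<lambda>h. f' (h *\<^sub>R w))) (at s)"
proof -
  have "((\<lambda>s. a + s *\<^sub>R w) has_derivative (\<lambda>h. h *\<^sub>R w)) (at s)"
    by (auto intro!: derivative_eq_intros)
  from diff_chain_at[OF this assms] show ?thesis by (simp add: o_def)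
qed

lemma fd_scale:
  assumes "(f has_derivative f') (at y)"
  shows "f' (h *\<^sub>R w) = h *\<^sub>R f' w"
  using has_derivative_bounded_linear[OF assms] by (simp add: bounded_linear.linear linear_scale)

lemma Delta_repr:
  fixes g :: "'a::euclidean_space \<Rightarrow> real"
  assumes S: "open S" and g: "cinf_on S g" and t: "t > 0"
    and box: "\<And>s r. 0 \<le> s \<Longrightarrow> s \<le> t \<Longrightarrow> 0 \<le> r \<Longrightarrow> r \<le> t \<Longrightarrow> x + s *\<^sub>R u + r *\<^sub>R v \<in> S"
  shows "\<exists>s r. 0 \<le> s \<and> s \<le> t \<and> 0 \<le> r \<and> r \<le> t \<and>
     g (x + t *\<^sub>R u + t *\<^sub>R v) - g (x + t *\<^sub>R u) - g (x + t *\<^sub>R v) + g x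
       = t * t * fd (\<lambda>y. fd g y u) (x + s *\<^sub>R u + r *\<^sub>R v) v"
proof -
  let ?Gu = "\<lambda>y. fd g y u"
  have Gu: "cinf_on S ?Gu" by (rule cinf_dir[OF g])
  define \<phi> where "\<phi> = (\<lambda>s. g ((x + t *\<^sub>R v) + s *\<^sub>R u) - g (x + s *\<^sub>R u))"
  have in1: "\<And>s. 0 \<le> s \<Longrightarrow> s \<le> t \<Longrightarrow> (x + t *\<^sub>R v) + s *\<^sub>R u \<in> S"
    using box t by (metis add.assoc add.commute order_refl less_imp_le)
  have in2: "\<And>s. 0 \<le> s \<Longrightarrow> s \<le> t \<Longrightarrow> x + s *\<^sub>R u \<in> S"
    using box[of _ 0] t by simp
  have d\<phi>: "(\<phi> has_derivative (\<lambda>h. h * (?Gu ((x + t *\<^sub>R v) + s *\<^sub>R u) - ?Gu (x + s *\<^sub>R u)))) (at s within {0..t})"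
    if "0 \<le> s" "s \<le> t" for s
  proof -
    have h1: "(g has_derivative fd g ((x + t *\<^sub>R v) + s *\<^sub>R u)) (at ((x + t *\<^sub>R v) + s *\<^sub>R u))"
      by (rule cinf_hasd[OF S g in1[OF that]])
    have h2: "(g has_derivative fd g (x + s *\<^sub>R u)) (at (x + s *\<^sub>R u))"
      by (rule cinf_hasd[OF S g in2[OF that]])
    have "(\<phi> has_derivative (\<lambda>h. fd g ((x + t *\<^sub>R v) + s *\<^sub>R u) (h *\<^sub>R u) - fd g (x + s *\<^sub>R u) (h *\<^sub>R u))) (at s)"
      unfolding \<phi>_def by (rule has_derivative_diff[OF line_chain[OF h1] line_chain[OF h2]])
    moreover have "(\<lambda>h. fd g ((x + t *\<^sub>R v) + s *\<^sub>R u) (h *\<^sub>R u) - fd g (x + s *\<^sub>R u) (h *\<^sub>R u))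
       = (\<lambda>h. h * (?Gu ((x + t *\<^sub>R v) + s *\<^sub>R u) - ?Gu (x + s *\<^sub>R u)))"
      using fd_scale[OF h1] fd_scale[OF h2] by (auto simp: algebra_simps)
    ultimately show ?thesis by (auto intro: has_derivative_at_withinI)
  qed
  obtain \<sigma> where \<sigma>: "\<sigma> \<in> {0..t}" and e1: "\<phi> t - \<phi> 0 = t * (?Gu ((x + t *\<^sub>R v) + \<sigma> *\<^sub>R u) - ?Gu (x + \<sigma> *\<^sub>R u))"
    using mvt_very_simple[of 0 t \<phi>, OF _ d\<phi>] t by (auto simp: mult.commute)
  define \<psi> where "\<psi> = (\<lambda>r. ?Gu ((x + \<sigma> *\<^sub>R u) + r *\<^sub>R v))"
  have in3: "\<And>r. 0 \<le> r \<Longrightarrow> r \<le> t \<Longrightarrow> (x + \<sigma> *\<^sub>R u) + r *\<^sub>R v \<in> S"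
    using box \<sigma> by auto
  have d\<psi>: "(\<psi> has_derivative (\<lambda>h. h * fd ?Gu ((x + \<sigma> *\<^sub>R u) + r *\<^sub>R v) v)) (at r within {0..t})"
    if "0 \<le> r" "r \<le> t" for r
  proof -
    have h1: "(?Gu has_derivative fd ?Gu ((x + \<sigma> *\<^sub>R u) + r *\<^sub>R v)) (at ((x + \<sigma> *\<^sub>R u) + r *\<^sub>R v))"
      by (rule cinf_hasd[OF S Gu in3[OF that]])
    have "(\<psi> has_derivative (\<lambda>h. fd ?Gu ((x + \<sigma> *\<^sub>R u) + r *\<^sub>R v) (h *\<^sub>R v))) (at r)"
      unfolding \<psi>_def by (rule line_chain[OF h1])
    moreover have "(\<lambda>h. fd ?Gu ((x + \<sigma> *\<^sub>R u) + r *\<^sub>R v) (h *\<^sub>R v)) = (\<lambda>h. h * fd ?Gu ((x + \<sigma> *\<^sub>R u) + r *\<^sub>R v) v)"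
      using fd_scale[OF h1] by auto
    ultimately show ?thesis by (auto intro: has_derivative_at_withinI)
  qed
  obtain \<rho> where \<rho>: "\<rho> \<in> {0..t}" and e2: "\<psi> t - \<psi> 0 = t * fd ?Gu ((x + \<sigma> *\<^sub>R u) + \<rho> *\<^sub>R v) v"
    using mvt_very_simple[of 0 t \<psi>, OF _ d\<psi>] t by (auto simp: mult.commute)
  have "g (x + t *\<^sub>R u + t *\<^sub>R v) - g (x + t *\<^sub>R u) - g (x + t *\<^sub>R v) + g x = \<phi> t - \<phi> 0"
    unfolding \<phi>_def by (simp add: algebra_simps)
  also have "\<dots> = t * (\<psi> t - \<psi> 0)"
    unfolding e1 \<psi>_def by (simp add: algebra_simps)
  also have "\<dots> = t * t * fd ?Gu (x + \<sigma> *\<^sub>R u + \<rho> *\<^sub>R v) v"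
    unfolding e2 by simp
  finally show ?thesis using \<sigma> \<rho> by auto
qed


lemma cinf_isCont:
  assumes S: "open S" and f: "cinf_on S f" and x: "x \<in> S"
  shows "isCont f x"
  using differentiable_imp_continuous_on[OF cinf_diff[OF f]] continuous_on_eq_continuous_at[OF S] x by blast

lemma abs3_contra: "\<bar>a1 - ax\<bar> < \<bar>ax - bx\<bar> / 3 \<Longrightarrow> \<bar>b1 - bx\<bar> < \<bar>ax - bx\<bar> / 3 \<Longrightarrow> a1 = b1 \<Longrightarrow> False"
  for a1 ax b1 bx :: real by (simp add: abs_if split: if_splits)

lemma schwarz_real:
  fixes g :: "'a::euclidean_space \<Rightarrow> real"
  assumes S: "open S" and g: "cinf_on S g" and x: "x \<in> S"
  shows "fd (\<lambda>y. fd g y u) x v = fd (\<lambda>y. fd g y v) x u"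
proof (rule ccontr)
  let ?A = "\<lambda>y. fd (\<lambda>y. fd g y u) y v"
  let ?B = "\<lambda>y. fd (\<lambda>y. fd g y v) y u"
  assume ne: "?A x \<noteq> ?B x"
  define d where "d = \<bar>?A x - ?B x\<bar>"
  have d: "d > 0" using ne unfolding d_def by simp
  have cA: "isCont ?A x" by (rule cinf_isCont[OF S cinf_dir[OF cinf_dir[OF g]] x])
  have cB: "isCont ?B x" by (rule cinf_isCont[OF S cinf_dir[OF cinf_dir[OF g]] x])
  obtain dA where dA: "dA > 0" "\<And>y. dist y x < dA \<Longrightarrow> dist (?A y) (?A x) < d / 3"
    using cA[unfolded continuous_at_eps_delta] d by (metis divide_pos_pos zero_less_numeral)
  obtain dB where dB: "dB > 0" "\<And>y. dist y x < dB \<Longrightarrow> dist (?B y) (?B x) < d / 3"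
    using cB[unfolded continuous_at_eps_delta] d by (metis divide_pos_pos zero_less_numeral)
  obtain r where r: "r > 0" "ball x r \<subseteq> S" using S x open_contains_ball by blast
  define \<delta> where "\<delta> = min r (min dA dB)"
  have \<delta>: "\<delta> > 0" using r dA dB unfolding \<delta>_def by simp
  define t where "t = \<delta> / (2 * (norm u + norm v + 1))"
  have t: "t > 0" unfolding t_def using \<delta> by (simp add: add_nonneg_pos)
  have close: "dist (x + s *\<^sub>R a + r' *\<^sub>R b) x < \<delta>"
    if "0 \<le> s" "s \<le> t" "0 \<le> r'" "r' \<le> t" "(a = u \<and> b = v) \<or> (a = v \<and> b = u)" for s r' a b
  proof -
    have "dist (x + s *\<^sub>R a + r' *\<^sub>R b) x = norm (s *\<^sub>R a + r' *\<^sub>R b)"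
      by (simp add: dist_norm)
    also have "\<dots> \<le> s * norm a + r' * norm b"
      using norm_triangle_ineq[of "s *\<^sub>R a" "r' *\<^sub>R b"] that by simp
    also have "\<dots> \<le> t * norm a + t * norm b"
      using that by (intro add_mono mult_right_mono) auto
    also have "\<dots> = t * (norm u + norm v)" using that(5) by (auto simp: algebra_simps)
    also have "\<dots> < \<delta>"
    proof -
      have "t * (norm u + norm v) \<le> t * (norm u + norm v + 1)" using t by simp
      also have "\<dots> = \<delta> / 2"
      proof -
        have "norm u + norm v + 1 > 0" by (simp add: add_nonneg_pos)
        then show ?thesis unfolding t_def by (simp add: field_simps)
      qed
      finally show ?thesis using \<delta> by simp
    qed
    finally show ?thesis .
  qed
  have inS: "x + s *\<^sub>R a + r' *\<^sub>R b \<in> S"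
    if "0 \<le> s" "s \<le> t" "0 \<le> r'" "r' \<le> t" "(a = u \<and> b = v) \<or> (a = v \<and> b = u)" for s r' a b
    using close[OF that] r \<delta>_def by (auto simp: dist_commute subset_iff)
  obtain s1 r1 where sr1: "0 \<le> s1" "s1 \<le> t" "0 \<le> r1" "r1 \<le> t" and
    e1: "g (x + t *\<^sub>R u + t *\<^sub>R v) - g (x + t *\<^sub>R u) - g (x + t *\<^sub>R v) + g x = t * t * ?A (x + s1 *\<^sub>R u + r1 *\<^sub>R v)"
    using Delta_repr[OF S g t, of x u v] inS by blast
  obtain s2 r2 where sr2: "0 \<le> s2" "s2 \<le> t" "0 \<le> r2" "r2 \<le> t" and
    e2: "g (x + t *\<^sub>R v + t *\<^sub>R u) - g (x + t *\<^sub>R v) - g (x + t *\<^sub>R u) + g x = t * t * ?B (x + s2 *\<^sub>R v + r2 *\<^sub>R u)"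
    using Delta_repr[OF S g t, of x v u] inS by blast
  have "t * t * ?A (x + s1 *\<^sub>R u + r1 *\<^sub>R v) = t * t * ?B (x + s2 *\<^sub>R v + r2 *\<^sub>R u)"
    using e1 e2 by (simp add: algebra_simps)
  then have AB: "?A (x + s1 *\<^sub>R u + r1 *\<^sub>R v) = ?B (x + s2 *\<^sub>R v + r2 *\<^sub>R u)" using t by simp
  have "dist (?A (x + s1 *\<^sub>R u + r1 *\<^sub>R v)) (?A x) < d / 3"
    using dA(2) close[OF sr1] \<delta>_def by auto
  moreover have "dist (?B (x + s2 *\<^sub>R v + r2 *\<^sub>R u)) (?B x) < d / 3"
    using dB(2) close[OF sr2] \<delta>_def by auto
  ultimately show False unfolding d_def dist_real_def using AB abs3_contra by metis
qed


lemma fd_inner_b: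
  assumes "(f has_derivative f') (at x)"
  shows "fd (\<lambda>y. f y \<bullet> b) x = (\<lambda>w. f' w \<bullet> b)"
  by (rule frechet_derivative_at[symmetric]) (rule has_derivative_inner_left[OF assms])

lemma schwarz:
  fixes f :: "'a::euclidean_space \<Rightarrow> 'b::euclidean_space"
  assumes S: "open S" and f: "cinf_on S f" and x: "x \<in> S"
  shows "fd (\<lambda>y. fd f y u) x v = fd (\<lambda>y. fd f y v) x u"
proof (rule euclidean_eqI)
  fix b :: 'b assume b: "b \<in> Basis"
  let ?g = "\<lambda>y. f y \<bullet> b"
  have g: "cinf_on S ?g" by (rule cinf_inner[OF S f])
  have dg: "\<And>y w. y \<in> S \<Longrightarrow> fd ?g y w = fd f y w \<bullet> b"
    using fd_inner_b[OF cinf_hasd[OF S f]] by simp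
  have key: "fd (\<lambda>y. fd ?g y w) x w' = fd (\<lambda>y. fd f y w) x w' \<bullet> b" for w w'
  proof -
    have "fd (\<lambda>y. fd ?g y w) x = fd (\<lambda>y. fd f y w \<bullet> b) x"
      by (rule fd_local[OF S x]) (simp add: dg)
    also have "\<dots> = (\<lambda>w'. fd (\<lambda>y. fd f y w) x w' \<bullet> b)"
      by (rule fd_inner_b[OF cinf_hasd[OF S cinf_dir[OF f] x]])
    finally show ?thesis by simp
  qed
  show "fd (\<lambda>y. fd f y u) x v \<bullet> b = fd (\<lambda>y. fd f y v) x u \<bullet> b"
    using key[of u v] key[of v u] schwarz_real[OF S g x, of u v] by simp
qed

lemma fd_expand:
  assumes "(f has_derivative f') F"
  shows "f' w = (\<Sum>b\<in>Basis. (w \<bullet> b) *\<^sub>R f' b)"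
proof -
  have lin: "linear f'" by (rule has_derivative_linear[OF assms])
  have "f' w = f' (\<Sum>b\<in>Basis. (w \<bullet> b) *\<^sub>R b)" by (simp add: euclidean_representation)
  also have "\<dots> = (\<Sum>b\<in>Basis. (w \<bullet> b) *\<^sub>R f' b)" by (simp add: linear_sum[OF lin] linear_scale[OF lin])
  finally show ?thesis .
qed

definition Bc :: "('a::euclidean_space \<Rightarrow> 'a \<Rightarrow> 'a \<Rightarrow> 'a) \<Rightarrow> 'a \<Rightarrow> 'a \<Rightarrow> 'a \<Rightarrow> 'a" where
  "Bc g q x y = (\<Sum>a\<in>Basis. \<Sum>b\<in>Basis. ((x \<bullet> a) * (y \<bullet> b)) *\<^sub>R g a b q)"

definition dBc :: "('a::euclidean_space \<Rightarrow> 'a \<Rightarrow> 'a \<Rightarrow> 'a) \<Rightarrow> 'a \<Rightarrow> 'a \<Rightarrow> 'a \<Rightarrow> 'a \<Rightarrow> 'a" where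
  "dBc g q w x y = (\<Sum>a\<in>Basis. \<Sum>b\<in>Basis. ((x \<bullet> a) * (y \<bullet> b)) *\<^sub>R fd (g a b) q w)"

definition conB :: "('a::euclidean_space \<Rightarrow> 'a \<Rightarrow> 'a \<Rightarrow> 'a) \<Rightarrow> ('a \<Rightarrow> 'a) \<Rightarrow> ('a \<Rightarrow> 'a) \<Rightarrow> 'a \<Rightarrow> 'a" where
  "conB g X Y = (\<lambda>q. fd Y q (X q) + Bc g q (X q) (Y q))"

definition Hs :: "('a::euclidean_space \<Rightarrow> 'a) \<Rightarrow> 'a \<Rightarrow> 'a \<Rightarrow> 'a \<Rightarrow> 'a" where
  "Hs Z q y w = (\<Sum>a\<in>Basis. (y \<bullet> a) *\<^sub>R fd (\<lambda>q. fd Z q a) q w)"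

definition Kf :: "('a::euclidean_space \<Rightarrow> 'a \<Rightarrow> 'a \<Rightarrow> 'a) \<Rightarrow> 'a \<Rightarrow> 'a \<Rightarrow> 'a \<Rightarrow> 'a \<Rightarrow> 'a" where
  "Kf g q x y z = dBc g q x y z - dBc g q y x z + Bc g q x (Bc g q y z) - Bc g q y (Bc g q x z)"

definition KK :: "('a \<Rightarrow> 'a \<Rightarrow> 'a \<Rightarrow> 'a::real_vector) \<Rightarrow> 'a \<Rightarrow> 'a \<Rightarrow> 'a \<Rightarrow> 'a \<Rightarrow> 'a \<Rightarrow> 'a" where
  "KK K x y z w u = K x y (K z w u) - K (K x y z) w u - K z (K x y w) u - K z w (K x y u)"

lemma Bc_diff_left: "Bc g q (x - y) z = Bc g q x z - Bc g q y z"
  unfolding Bc_def by (simp add: inner_diff_left left_diff_distrib scaleR_diff_left sum_subtractf)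

lemma Bc_add_right: "Bc g q x (y + z) = Bc g q x y + Bc g q x z"
  unfolding Bc_def by (simp add: inner_add_left distrib_left scaleR_add_left sum.distrib)

lemma Bc_hasd:
  assumes X: "(X has_derivative X') (at q)" and Y: "(Y has_derivative Y') (at q)"
    and g: "\<And>a b. (g a b has_derivative fd (g a b) q) (at q)"
  shows "((\<lambda>q. Bc g q (X q) (Y q)) has_derivative
     (\<lambda>w. Bc g q (X' w) (Y q) + Bc g q (X q) (Y' w) + dBc g q w (X q) (Y q))) (at q)"
proof -
  have "((\<lambda>q. Bc g q (X q) (Y q)) has_derivative
     (\<lambda>w. \<Sum>a\<in>Basis. \<Sum>b\<in>Basis. ((X q \<bullet> a) * (Y q \<bullet> b)) *\<^sub>R fd (g a b) q w
          + ((X q \<bullet> a) * (Y' w \<bullet> b) + (X' w \<bullet> a) * (Y q \<bullet> b)) *\<^sub>R g a b q)) (at q)"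
    unfolding Bc_def
    by (intro has_derivative_sum has_derivative_scaleR has_derivative_mult has_derivative_inner_left X Y g)
  moreover have "(\<lambda>w. \<Sum>a\<in>Basis. \<Sum>b\<in>Basis. ((X q \<bullet> a) * (Y q \<bullet> b)) *\<^sub>R fd (g a b) q w
          + ((X q \<bullet> a) * (Y' w \<bullet> b) + (X' w \<bullet> a) * (Y q \<bullet> b)) *\<^sub>R g a b q)
     = (\<lambda>w. Bc g q (X' w) (Y q) + Bc g q (X q) (Y' w) + dBc g q w (X q) (Y q))"
    unfolding Bc_def dBc_def by (auto simp: sum.distrib scaleR_add_left algebra_simps)
  ultimately show ?thesis by simp
qed


lemma fdY_hasd:
  assumes S: "open S" and Y: "cinf_on S Y" and Z: "cinf_on S Z" and q: "q \<in> S"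
  shows "((\<lambda>q. fd Z q (Y q)) has_derivative (\<lambda>w. fd Z q (fd Y q w) + Hs Z q (Y q) w)) (at q)"
proof -
  have eq: "\<And>x. x \<in> S \<Longrightarrow> (\<Sum>a\<in>Basis. (Y x \<bullet> a) *\<^sub>R fd Z x a) = fd Z x (Y x)"
    using fd_expand[OF cinf_hasd[OF S Z], symmetric] by blast
  have "((\<lambda>q. \<Sum>a\<in>Basis. (Y q \<bullet> a) *\<^sub>R fd Z q a) has_derivative
      (\<lambda>w. \<Sum>a\<in>Basis. (Y q \<bullet> a) *\<^sub>R fd (\<lambda>q. fd Z q a) q w + (fd Y q w \<bullet> a) *\<^sub>R fd Z q a)) (at q)"
    by (rule has_derivative_sum, rule has_derivative_scaleR[OF has_derivative_inner_left[OF cinf_hasd[OF S Y q]]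
        cinf_hasd[OF S cinf_dir[OF Z] q]])
  moreover have "(\<lambda>w. \<Sum>a\<in>Basis. (Y q \<bullet> a) *\<^sub>R fd (\<lambda>q. fd Z q a) q w + (fd Y q w \<bullet> a) *\<^sub>R fd Z q a)
     = (\<lambda>w. fd Z q (fd Y q w) + Hs Z q (Y q) w)"
  proof
    fix w
    have "(\<Sum>a\<in>Basis. (fd Y q w \<bullet> a) *\<^sub>R fd Z q a) = fd Z q (fd Y q w)"
      by (rule fd_expand[OF cinf_hasd[OF S Z q], symmetric])
    then show "(\<Sum>a\<in>Basis. (Y q \<bullet> a) *\<^sub>R fd (\<lambda>q. fd Z q a) q w + (fd Y q w \<bullet> a) *\<^sub>R fd Z q a)
     = fd Z q (fd Y q w) + Hs Z q (Y q) w"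
      unfolding Hs_def by (simp add: sum.distrib)
  qed
  ultimately have "((\<lambda>q. \<Sum>a\<in>Basis. (Y q \<bullet> a) *\<^sub>R fd Z q a) has_derivative
      (\<lambda>w. fd Z q (fd Y q w) + Hs Z q (Y q) w)) (at q)" by simp
  then show ?thesis
    by (rule has_derivative_transform_within_open[OF _ S q]) (use eq in auto)
qed

lemma Hs_sym:
  assumes S: "open S" and Z: "cinf_on S Z" and q: "q \<in> S"
  shows "Hs Z q y w = Hs Z q w y"
proof -
  let ?Z2 = "\<lambda>a b. fd (\<lambda>q. fd Z q a) q b"
  have ex: "\<And>a v. ?Z2 a v = (\<Sum>b\<in>Basis. (v \<bullet> b) *\<^sub>R ?Z2 a b)"
    using fd_expand[OF cinf_hasd[OF S cinf_dir[OF Z] q]] by metis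
  have sw: "\<And>a b. ?Z2 a b = ?Z2 b a" using schwarz[OF S Z q] by metis
  have "Hs Z q y w = (\<Sum>a\<in>Basis. \<Sum>b\<in>Basis. ((y \<bullet> a) * (w \<bullet> b)) *\<^sub>R ?Z2 a b)"
    unfolding Hs_def by (subst ex) (simp add: scaleR_sum_right)
  also have "\<dots> = (\<Sum>b\<in>Basis. \<Sum>a\<in>Basis. ((y \<bullet> a) * (w \<bullet> b)) *\<^sub>R ?Z2 b a)"
    by (subst sum.swap) (simp add: sw)
  also have "\<dots> = Hs Z q w y"
    unfolding Hs_def by (subst ex) (simp add: scaleR_sum_right mult.commute)
  finally show ?thesis .
qed

lemma conB_hasd:
  assumes S: "open S" and g: "\<And>a b. cinf_on S (g a b)" and Y: "cinf_on S Y" and Z: "cinf_on S Z" and q: "q \<in> S"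
  shows "(conB g Y Z has_derivative (\<lambda>w. fd Z q (fd Y q w) + Hs Z q (Y q) w
     + (Bc g q (fd Y q w) (Z q) + Bc g q (Y q) (fd Z q w) + dBc g q w (Y q) (Z q)))) (at q)"
  unfolding conB_def
  by (rule has_derivative_add[OF fdY_hasd[OF S Y Z q] Bc_hasd[OF cinf_hasd[OF S Y q] cinf_hasd[OF S Z q] cinf_hasd[OF S g q]]])

lemma curv_conB:
  assumes S: "open S" and g: "\<And>a b. cinf_on S (g a b)"
    and X: "cinf_on S X" and Y: "cinf_on S Y" and Z: "cinf_on S Z" and q: "q \<in> S"
  shows "curv (conB g) X Y Z q = Kf g q (X q) (Y q) (Z q)"
proof -
  have d1: "fd (conB g Y Z) q = (\<lambda>w. fd Z q (fd Y q w) + Hs Z q (Y q) w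
     + (Bc g q (fd Y q w) (Z q) + Bc g q (Y q) (fd Z q w) + dBc g q w (Y q) (Z q)))"
    by (rule frechet_derivative_at[symmetric, OF conB_hasd[OF S g Y Z q]])
  have d2: "fd (conB g X Z) q = (\<lambda>w. fd Z q (fd X q w) + Hs Z q (X q) w
     + (Bc g q (fd X q w) (Z q) + Bc g q (X q) (fd Z q w) + dBc g q w (X q) (Z q)))"
    by (rule frechet_derivative_at[symmetric, OF conB_hasd[OF S g X Z q]])
  have linZ: "linear (fd Z q)" by (rule has_derivative_linear[OF cinf_hasd[OF S Z q]])
  have lie: "lie X Y q = fd Y q (X q) - fd X q (Y q)" by (simp add: lie_def)
  have hs: "Hs Z q (Y q) (X q) = Hs Z q (X q) (Y q)" by (rule Hs_sym[OF S Z q])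
  show ?thesis
    unfolding curv_def Kf_def
    apply (simp only: conB_def[of g X] conB_def[of g Y] conB_def[of g "lie X Y"])
    apply (simp only: d1 d2 lie linear_diff[OF linZ] Bc_diff_left Bc_add_right hs flip: conB_def)
    apply (simp add: conB_def Bc_add_right algebra_simps)
    done
qed


lemma cinf_Bc:
  assumes S: "open S" and g: "\<And>a b. cinf_on S (g a b)" and X: "cinf_on S X" and Y: "cinf_on S Y"
  shows "cinf_on S (\<lambda>q. Bc g q (X q) (Y q))"
  unfolding Bc_def
  by (intro cinf_sum cinf_scaleR cinf_mult cinf_inner S X Y g)

lemma cinf_fdXY:
  assumes S: "open S" and X: "cinf_on S X" and Y: "cinf_on S Y"
  shows "cinf_on S (\<lambda>q. fd Y q (X q))"
proof (rule cinf_cong[OF S])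
  show "cinf_on S (\<lambda>q. \<Sum>a\<in>Basis. (X q \<bullet> a) *\<^sub>R fd Y q a)"
    by (intro cinf_sum cinf_scaleR cinf_inner cinf_dir S X Y)
  show "\<And>x. x \<in> S \<Longrightarrow> (\<Sum>a\<in>Basis. (X x \<bullet> a) *\<^sub>R fd Y x a) = fd Y x (X x)"
    using fd_expand[OF cinf_hasd[OF S Y], symmetric] by blast
qed

lemma cinf_conB:
  assumes S: "open S" and g: "\<And>a b. cinf_on S (g a b)" and X: "cinf_on S X" and Y: "cinf_on S Y"
  shows "cinf_on S (conB g X Y)"
  unfolding conB_def by (intro cinf_add cinf_fdXY cinf_Bc S g X Y)

lemma cinf_lie:
  assumes S: "open S" and X: "cinf_on S X" and Y: "cinf_on S Y"
  shows "cinf_on S (lie X Y)"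
  unfolding lie_def by (intro cinf_minus cinf_fdXY S X Y)

lemma cinf_dBc:
  assumes S: "open S" and g: "\<And>a b. cinf_on S (g a b)" and X: "cinf_on S X" and Y: "cinf_on S Y" and Z: "cinf_on S Z"
  shows "cinf_on S (\<lambda>q. dBc g q (X q) (Y q) (Z q))"
  unfolding dBc_def by (intro cinf_sum cinf_scaleR cinf_mult cinf_inner cinf_fdXY S X Y Z g)

lemma cinf_Kf:
  assumes S: "open S" and g: "\<And>a b. cinf_on S (g a b)" and X: "cinf_on S X" and Y: "cinf_on S Y" and Z: "cinf_on S Z"
  shows "cinf_on S (\<lambda>q. Kf g q (X q) (Y q) (Z q))"
  unfolding Kf_def
  by (intro cinf_add cinf_minus cinf_dBc cinf_Bc S g X Y Z)

definition agrees :: "(('a::euclidean_space \<Rightarrow> 'a) \<Rightarrow> ('a \<Rightarrow> 'a) \<Rightarrow> ('a \<Rightarrow> 'a)) \<Rightarrow> ('a \<Rightarrow> 'a \<Rightarrow> 'a \<Rightarrow> 'a) \<Rightarrow> 'a set \<Rightarrow> bool" where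
  "agrees D g S \<longleftrightarrow> (\<forall>X Y. cinf_on S X \<longrightarrow> cinf_on S Y \<longrightarrow> (\<forall>q\<in>S. D X Y q = conB g X Y q))"

lemma curv_D:
  assumes S: "open S" and g: "\<And>a b. cinf_on S (g a b)" and D: "agrees D g S"
    and X: "cinf_on S X" and Y: "cinf_on S Y" and Z: "cinf_on S Z" and q: "q \<in> S"
  shows "curv D X Y Z q = Kf g q (X q) (Y q) (Z q)"
proof -
  have ag: "\<And>X Y q. cinf_on S X \<Longrightarrow> cinf_on S Y \<Longrightarrow> q \<in> S \<Longrightarrow> D X Y q = conB g X Y q"
    using D unfolding agrees_def by blast
  have step: "D A (D B Z) q = conB g A (conB g B Z) q" if A: "cinf_on S A" and B: "cinf_on S B" for A B
  proof -
    have c: "cinf_on S (D B Z)"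
      by (rule cinf_cong[OF S cinf_conB[OF S g B Z]]) (simp add: ag[OF B Z])
    have "D A (D B Z) q = conB g A (D B Z) q" by (rule ag[OF A c q])
    also have "\<dots> = fd (conB g B Z) q (A q) + Bc g q (A q) (conB g B Z q)"
      using fd_local[OF S q, of "D B Z" "conB g B Z"] ag[OF B Z] q by (simp add: conB_def[of g A])
    also have "\<dots> = conB g A (conB g B Z) q" by (simp only: conB_def[of g A])
    finally show ?thesis .
  qed
  have "curv D X Y Z q = curv (conB g) X Y Z q"
    unfolding curv_def using step[OF X Y] step[OF Y X] ag[OF cinf_lie[OF S X Y] Z q] by simp
  also have "\<dots> = Kf g q (X q) (Y q) (Z q)" by (rule curv_conB[OF S g X Y Z q])
  finally show ?thesis .
qed

lemma cinf_curv_D: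
  assumes S: "open S" and g: "\<And>a b. cinf_on S (g a b)" and D: "agrees D g S"
    and X: "cinf_on S X" and Y: "cinf_on S Y" and Z: "cinf_on S Z"
  shows "cinf_on S (curv D X Y Z)"
  by (rule cinf_cong[OF S cinf_Kf[OF S g X Y Z]]) (simp add: curv_D[OF S g D X Y Z])

lemma semi_sym_iff:
  assumes S: "open S" and g: "\<And>a b. cinf_on S (g a b)" and D: "agrees D g S"
  shows "semi_symmetric D S \<longleftrightarrow> (\<forall>q\<in>S. \<forall>x y z w u. KK (Kf g q) x y z w u = 0)"
proof -
  have cdc: "curv_dot_curv D X Y Z W U q = KK (Kf g q) (X q) (Y q) (Z q) (W q) (U q)"
    if X: "cinf_on S X" and Y: "cinf_on S Y" and Z: "cinf_on S Z" and W: "cinf_on S W" and U: "cinf_on S U"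
      and q: "q \<in> S" for X Y Z W U q
    unfolding curv_dot_curv_def KK_def
    by (simp add: curv_D[OF S g D _ _ _ q] cinf_curv_D[OF S g D] X Y Z W U)
  show ?thesis
  proof
    assume ss: "semi_symmetric D S"
    show "\<forall>q\<in>S. \<forall>x y z w u. KK (Kf g q) x y z w u = 0"
    proof (intro ballI allI)
      fix q x y z w u assume q: "q \<in> S"
      have c: "\<And>v::'a. cinf_on S (\<lambda>_. v)" by (rule cinf_const[OF S])
      have "curv_dot_curv D (\<lambda>_. x) (\<lambda>_. y) (\<lambda>_. z) (\<lambda>_. w) (\<lambda>_. u) q = 0"
        using ss q c unfolding semi_symmetric_def by blast
      then show "KK (Kf g q) x y z w u = 0" using cdc[OF c c c c c q] by simp
    qed
  next
    assume "\<forall>q\<in>S. \<forall>x y z w u. KK (Kf g q) x y z w u = 0"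
    then show "semi_symmetric D S" unfolding semi_symmetric_def using cdc by simp
  qed
qed

lemma Bc_bilinear:
  assumes "bilinear (G q)"
  shows "Bc (\<lambda>a b q. G q a b) q x y = G q x y"
proof -
  have "G q x y = G q (\<Sum>a\<in>Basis. (x \<bullet> a) *\<^sub>R a) (\<Sum>b\<in>Basis. (y \<bullet> b) *\<^sub>R b)"
    by (simp add: euclidean_representation)
  also have "\<dots> = (\<Sum>(a, b)\<in>Basis \<times> Basis. G q ((x \<bullet> a) *\<^sub>R a) ((y \<bullet> b) *\<^sub>R b))"
    by (rule bilinear_sum[OF assms])
  also have "\<dots> = (\<Sum>(a, b)\<in>Basis \<times> Basis. ((x \<bullet> a) * (y \<bullet> b)) *\<^sub>R G q a b)"
    by (simp add: bilinear_lmul[OF assms] bilinear_rmul[OF assms] mult.commute)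
  also have "\<dots> = Bc (\<lambda>a b q. G q a b) q x y"
    unfolding Bc_def by (simp add: sum.cartesian_product)
  finally show ?thesis by simp
qed

lemma vec_lambda_sum: "(\<chi> h. f h) = (\<Sum>h\<in>UNIV. f h *\<^sub>R axis h (1::real))"
  by (simp add: vec_eq_iff sum_component axis_def if_distrib sum.delta cong: if_cong)

lemma cinf_vec:
  assumes S: "open S" and f: "\<And>h. cinf_on S (f h)"
  shows "cinf_on S (\<lambda>x. (\<chi> h. f h x) :: real^'n::finite)"
  unfolding vec_lambda_sum by (intro cinf_sum cinf_scaleR cinf_const S f)

definition baseG :: "('n::finite \<Rightarrow> 'n \<Rightarrow> 'n \<Rightarrow> real^'n \<Rightarrow> real) \<Rightarrow> real^'n \<Rightarrow> real^'n \<Rightarrow> real^'n \<Rightarrow> real^'n" where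
  "baseG Gam x a b = (\<chi> h. \<Sum>i\<in>UNIV. \<Sum>j\<in>UNIV. a $ i * b $ j * Gam h i j x)"

lemma bilinear_baseG: "bilinear (baseG Gam x)"
  unfolding bilinear_def linear_iff baseG_def
  by (simp add: vec_eq_iff algebra_simps sum.distrib sum_distrib_left)

lemma base_conn_conB: "base_conn Gam = conB (\<lambda>a b x. baseG Gam x a b)"
  unfolding base_conn_def conB_def
  by (intro ext, simp only: Bc_bilinear[OF bilinear_baseG]) (simp add: baseG_def)

lemma cinf_baseG:
  assumes S: "open U" and G: "\<And>h i j. cinf_on U (Gam h i j)"
  shows "cinf_on U (\<lambda>x. baseG Gam x a b)"
  unfolding baseG_def by (intro cinf_vec cinf_sum cinf_mult cinf_const S G)

definition RM :: "('n::finite \<Rightarrow> 'n \<Rightarrow> 'n \<Rightarrow> real^'n \<Rightarrow> real) \<Rightarrow> real^'n \<Rightarrow> real^'n \<Rightarrow> real^'n \<Rightarrow> real^'n \<Rightarrow> real^'n" where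
  "RM Gam x a b c = fd (\<lambda>x. baseG Gam x b c) x a + baseG Gam x a (baseG Gam x b c)
     - fd (\<lambda>x. baseG Gam x a c) x b - baseG Gam x b (baseG Gam x a c)"

lemma curv_base_const: "curv (base_conn Gam) (\<lambda>_. a) (\<lambda>_. b) (\<lambda>_. c) x = RM Gam x a b c"
proof -
  have bc: "\<And>a b. base_conn Gam (\<lambda>_. a) (\<lambda>_. b) = (\<lambda>x. baseG Gam x a b)"
    unfolding base_conn_def baseG_def by (simp add: frechet_derivative_const)
  have lie: "lie (\<lambda>_. a) (\<lambda>_. b) = (\<lambda>_. 0)" unfolding lie_def by (simp add: frechet_derivative_const)
  have z: "base_conn Gam (\<lambda>_. 0) (\<lambda>_. c) x = 0"
    unfolding base_conn_def by (simp add: frechet_derivative_const) (simp add: vec_eq_iff)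
  show ?thesis
    unfolding curv_def RM_def bc lie z
    by (simp add: base_conn_def baseG_def) (simp add: vec_eq_iff)
qed

lemma Rc_RM: "Rc Gam i j k h x = RM Gam x (axis i 1) (axis j 1) (axis k 1) $ h"
  unfolding Rc_def curv_base_const ..

lemma Kf_base:
  assumes U: "open U" and G: "\<And>h i j. cinf_on U (Gam h i j)" and x: "x \<in> U"
  shows "Kf (\<lambda>a b x. baseG Gam x a b) x a b c = RM Gam x a b c"
proof -
  have ag: "agrees (base_conn Gam) (\<lambda>a b x. baseG Gam x a b) U"
    unfolding agrees_def base_conn_conB by simp
  have c: "\<And>v. cinf_on U (\<lambda>_::real^'a. v::real^'a)" by (rule cinf_const[OF U])
  show ?thesis
    using curv_D[OF U cinf_baseG[OF U G] ag c c c x] curv_base_const by metis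
qed

lemma base_semi_sym:
  assumes U: "open U" and G: "\<And>h i j. cinf_on U (Gam h i j)"
  shows "semi_symmetric (base_conn Gam) U \<longleftrightarrow> (\<forall>x\<in>U. \<forall>a b c d e. KK (RM Gam x) a b c d e = 0)"
proof -
  have ag: "agrees (base_conn Gam) (\<lambda>a b x. baseG Gam x a b) U"
    unfolding agrees_def base_conn_conB by simp
  have eq: "\<And>x. x \<in> U \<Longrightarrow> Kf (\<lambda>a b x. baseG Gam x a b) x = RM Gam x"
    using Kf_base[OF U G] by (intro ext) simp
  show ?thesis
    unfolding semi_sym_iff[OF U cinf_baseG[OF U G] ag] using eq by simp
qed

definition Phi :: "('n::finite \<Rightarrow> 'n \<Rightarrow> 'n \<Rightarrow> real^'n \<Rightarrow> real) \<Rightarrow> (real^'n) \<times> (real^'n) \<Rightarrow> real^'n \<Rightarrow> real^'n \<Rightarrow> (real^'n) \<times> (real^'n)" where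
  "Phi Gam q h v = (\<Sum>j\<in>UNIV. h $ j *\<^sub>R Eh Gam j q) + (\<Sum>j\<in>UNIV. v $ j *\<^sub>R Ev j q)"

definition vcv :: "('n::finite \<Rightarrow> 'n \<Rightarrow> 'n \<Rightarrow> real^'n \<Rightarrow> real) \<Rightarrow> (real^'n) \<times> (real^'n) \<Rightarrow> (real^'n) \<times> (real^'n) \<Rightarrow> 'n \<Rightarrow> real" where
  "vcv Gam q y j = snd y $ j - (\<Sum>a\<in>UNIV. \<Sum>h\<in>UNIV. snd q $ a * Gam a j h (fst q) * fst y $ h)"

lemma vcomp_vcv: "vcomp Gam Y j q = vcv Gam q (Y q) j"
  unfolding vcomp_def vcv_def ..

lemma sum_axis: "(\<Sum>j\<in>UNIV. h $ j *\<^sub>R axis j (1::real)) = h"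
  using vec_lambda_sum[of "\<lambda>j. h $ j"] by simp

lemma sum_chi: "(\<Sum>j\<in>A. c j *\<^sub>R (\<chi> k. F j k)) = (\<chi> k. \<Sum>j\<in>A. c j * F j k)"
  by (simp add: vec_eq_iff sum_component)

lemma Phi_fst: "fst (Phi Gam q h v) = h"
  unfolding Phi_def Eh_def Ev_def by (simp add: fst_sum sum_axis)

lemma Phi_snd: "snd (Phi Gam q h v) = v + (\<chi> k. \<Sum>j\<in>UNIV. h $ j * (\<Sum>a\<in>UNIV. snd q $ a * Gam a k j (fst q)))"
proof -
  have 1: "snd (\<Sum>j\<in>UNIV. h $ j *\<^sub>R Eh Gam j q) = (\<chi> k. \<Sum>j\<in>UNIV. h $ j * (\<Sum>a\<in>UNIV. snd q $ a * Gam a k j (fst q)))"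
    unfolding Eh_def by (simp only: snd_sum snd_scaleR snd_conv) (rule sum_chi)
  have 2: "snd (\<Sum>j\<in>UNIV. v $ j *\<^sub>R Ev j q) = v"
    unfolding Ev_def by (simp only: snd_sum snd_scaleR snd_conv sum_axis)
  show ?thesis unfolding Phi_def snd_add 1 2 by (rule add.commute)
qed

lemma Phi_eq: "Phi Gam q h v = (h, v + (\<chi> k. \<Sum>j\<in>UNIV. h $ j * (\<Sum>a\<in>UNIV. snd q $ a * Gam a k j (fst q))))"
  by (rule prod_eqI) (simp_all only: Phi_fst Phi_snd fst_conv snd_conv)

lemma vcv_Phi: "vcv Gam q (Phi Gam q h v) j = v $ j"
  unfolding vcv_def Phi_fst Phi_snd
  by (simp add: sum_distrib_left algebra_simps) (subst sum.swap, simp add: algebra_simps)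

lemma Phi_recon: "Phi Gam q (fst y) (\<chi> j. vcv Gam q y j) = y"
  unfolding Phi_eq vcv_def
  by (simp add: vec_eq_iff prod_eq_iff sum_distrib_left algebra_simps) (subst sum.swap, simp add: algebra_simps)

lemma Phi_diff: "Phi Gam q (h1 - h2) (v1 - v2) = Phi Gam q h1 v1 - Phi Gam q h2 v2"
  unfolding Phi_eq by (simp add: vec_eq_iff algebra_simps sum_subtractf)

lemma Phi_zero: "Phi Gam q 0 0 = 0"
  unfolding Phi_eq by (simp add: vec_eq_iff zero_prod_def)

lemma Phi_eq_zero: "Phi Gam q h v = 0 \<longleftrightarrow> h = 0 \<and> v = 0"
  unfolding Phi_eq by (auto simp: vec_eq_iff zero_prod_def)


lemma hasd_fst_comp:
  assumes "(f has_derivative f') (at (fst q))"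
  shows "((\<lambda>q. f (fst q)) has_derivative (\<lambda>w. f' (fst w))) (at q)"
proof -
  have "(fst has_derivative fst) (at q)"
    by (rule bounded_linear_imp_has_derivative[OF bounded_linear_fst])
  from diff_chain_at[OF this assms] show ?thesis by (simp add: o_def)
qed

lemma hasd_nth:
  assumes "(F has_derivative F') (at q)"
  shows "((\<lambda>q. F q $ j) has_derivative (\<lambda>w. F' w $ j)) (at q)"
  using bounded_linear.has_derivative[OF bounded_linear_vec_nth assms] .

lemma fd_nth:
  assumes "(F has_derivative F') (at q)"
  shows "fd (\<lambda>q. F q $ j) q = (\<lambda>w. F' w $ j)"
  by (rule frechet_derivative_at[symmetric, OF hasd_nth[OF assms]])

definition FF :: "('n::finite \<Rightarrow> 'n \<Rightarrow> 'n \<Rightarrow> real^'n \<Rightarrow> real) \<Rightarrow> (real^'n \<Rightarrow> real^'n) \<Rightarrow> (real^'n \<Rightarrow> real^'n) \<Rightarrow> (real^'n) \<times> (real^'n) \<Rightarrow> (real^'n) \<times> (real^'n)" where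
  "FF Gam f g = (\<lambda>q. Phi Gam q (f (fst q)) (g (fst q)))"

definition Gs :: "('n::finite \<Rightarrow> 'n \<Rightarrow> 'n \<Rightarrow> real^'n \<Rightarrow> real) \<Rightarrow> real^'n \<Rightarrow> real^'n \<Rightarrow> real^'n \<Rightarrow> real^'n" where
  "Gs Gam x a v = (\<chi> h. \<Sum>i\<in>UNIV. \<Sum>j\<in>UNIV. a $ i * v $ j * Gam j i h x)"

definition Acoef :: "('n::finite \<Rightarrow> 'n \<Rightarrow> 'n \<Rightarrow> real^'n \<Rightarrow> real) \<Rightarrow> ('n \<Rightarrow> 'n \<Rightarrow> real^'n \<Rightarrow> real) \<Rightarrow> 'n \<Rightarrow> 'n \<Rightarrow> 'n \<Rightarrow> real^'n \<Rightarrow> real" where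
  "Acoef Gam c i j h x = (cov_c Gam c i j h x + cov_c Gam c j i h x - cov_c Gam c h i j x) / 2"

definition Am :: "('n::finite \<Rightarrow> 'n \<Rightarrow> 'n \<Rightarrow> real^'n \<Rightarrow> real) \<Rightarrow> ('n \<Rightarrow> 'n \<Rightarrow> real^'n \<Rightarrow> real) \<Rightarrow> real^'n \<Rightarrow> real^'n \<Rightarrow> real^'n \<Rightarrow> real^'n" where
  "Am Gam c x a b = (\<chi> h. \<Sum>i\<in>UNIV. \<Sum>j\<in>UNIV. a $ i * b $ j * Acoef Gam c i j h x)"

lemma hcomp_FF: "hcomp (FF Gam f g) j = (\<lambda>q. f (fst q) $ j)"
  unfolding hcomp_def FF_def Phi_fst ..

lemma vcomp_FF: "vcomp Gam (FF Gam f g) j = (\<lambda>q. g (fst q) $ j)"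
  unfolding vcomp_vcv FF_def vcv_Phi ..

lemma triple_swap:
  "(\<Sum>i\<in>A. \<Sum>j\<in>B. c i j *\<^sub>R (\<Sum>h\<in>C. d i j h *\<^sub>R (E h::'a::real_vector)))
    = (\<Sum>h\<in>C. (\<Sum>i\<in>A. \<Sum>j\<in>B. c i j * d i j h) *\<^sub>R E h)"
proof -
  have "(\<Sum>i\<in>A. \<Sum>j\<in>B. c i j *\<^sub>R (\<Sum>h\<in>C. d i j h *\<^sub>R E h)) = (\<Sum>i\<in>A. \<Sum>j\<in>B. \<Sum>h\<in>C. (c i j * d i j h) *\<^sub>R E h)"
    by (simp add: scaleR_sum_right)
  also have "\<dots> = (\<Sum>i\<in>A. \<Sum>h\<in>C. \<Sum>j\<in>B. (c i j * d i j h) *\<^sub>R E h)"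
    by (rule sum.cong[OF refl], rule sum.swap)
  also have "\<dots> = (\<Sum>h\<in>C. \<Sum>i\<in>A. \<Sum>j\<in>B. (c i j * d i j h) *\<^sub>R E h)"
    by (rule sum.swap)
  also have "\<dots> = (\<Sum>h\<in>C. (\<Sum>i\<in>A. \<Sum>j\<in>B. c i j * d i j h) *\<^sub>R E h)"
    by (simp add: scaleR_sum_left)
  finally show ?thesis .
qed

lemma Phi_def2: "Phi Gam q h v = (\<Sum>k\<in>UNIV. h $ k *\<^sub>R Eh Gam k q) + (\<Sum>k\<in>UNIV. v $ k *\<^sub>R Ev k q)"
  by (rule Phi_def)

lemma conn_FF:
  assumes f: "(f has_derivative f') (at (fst q))" and g: "(g has_derivative g') (at (fst q))"
  shows "cot_conn Gam c X (FF Gam f g) q =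
    Phi Gam q (f' (fst (X q)) + baseG Gam (fst q) (fst (X q)) (f (fst q)))
              (g' (fst (X q)) - Gs Gam (fst q) (fst (X q)) (g (fst q)) + Am Gam c (fst q) (fst (X q)) (f (fst q)))"
proof -
  have df: "\<And>j. fd (hcomp (FF Gam f g) j) q = (\<lambda>w. f' (fst w) $ j)"
    unfolding hcomp_FF by (rule fd_nth[OF hasd_fst_comp[OF f]])
  have dg: "\<And>j. fd (vcomp Gam (FF Gam f g) j) q = (\<lambda>w. g' (fst w) $ j)"
    unfolding vcomp_FF by (rule fd_nth[OF hasd_fst_comp[OF g]])
  let ?w = "fst (X q)" and ?x = "fst q"
  have hX: "\<And>i. hcomp X i q = ?w $ i" unfolding hcomp_def ..
  have hY: "\<And>j. hcomp (FF Gam f g) j q = f ?x $ j" unfolding hcomp_FF ..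
  have vY: "\<And>j. vcomp Gam (FF Gam f g) j q = g ?x $ j" unfolding vcomp_FF ..
  have T3: "(\<Sum>i\<in>UNIV. \<Sum>j\<in>UNIV. (?w $ i * g ?x $ j) *\<^sub>R (\<Sum>h\<in>UNIV. (- Gam j i h ?x) *\<^sub>R Ev h q))
      = (\<Sum>h\<in>UNIV. (- Gs Gam ?x ?w (g ?x)) $ h *\<^sub>R Ev h q)"
    unfolding triple_swap Gs_def by (simp add: sum_negf)
  have T4: "(\<Sum>i\<in>UNIV. \<Sum>j\<in>UNIV. (?w $ i * f ?x $ j) *\<^sub>R
          ((\<Sum>h\<in>UNIV. Gam h i j ?x *\<^sub>R Eh Gam h q)
         + (\<Sum>h\<in>UNIV. ((cov_c Gam c i j h ?x + cov_c Gam c j i h ?x - cov_c Gam c h i j ?x) / 2) *\<^sub>R Ev h q)))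
      = (\<Sum>h\<in>UNIV. baseG Gam ?x ?w (f ?x) $ h *\<^sub>R Eh Gam h q) + (\<Sum>h\<in>UNIV. Am Gam c ?x ?w (f ?x) $ h *\<^sub>R Ev h q)"
    unfolding scaleR_add_right sum.distrib triple_swap baseG_def Am_def Acoef_def by simp
  show ?thesis
    unfolding cot_conn_def df dg hX hY vY T3 T4 Phi_def2
    by (simp add: scaleR_add_left scaleR_diff_left sum.distrib sum_subtractf sum_negf algebra_simps)
qed


lemma cinf_linear:
  assumes S: "open S" and L: "linear L"
  shows "cinf_on S L"
proof (rule cinf_coind[OF S, where P="\<lambda>h. h = L"])
  fix h assume h: "h = L"
  have bl: "bounded_linear L" using L linear_conv_bounded_linear by blast
  have hd: "\<And>x. (h has_derivative L) (at x)" unfolding h by (rule bounded_linear_imp_has_derivative[OF bl])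
  have "h differentiable_on S" using hd differentiable_on_eq_differentiable_at[OF S] differentiable_def by blast
  moreover have "\<forall>v. \<exists>g'. (g' = L \<or> cinf_on S g') \<and> (\<forall>x\<in>S. fd h x v = g' x)"
  proof
    fix v
    have "\<forall>x\<in>S. fd h x v = L v" using frechet_derivative_at[OF hd] by simp
    then show "\<exists>g'. (g' = L \<or> cinf_on S g') \<and> (\<forall>x\<in>S. fd h x v = g' x)"
      using cinf_const[OF S, of "L v"] by blast
  qed
  ultimately show "h differentiable_on S \<and> (\<forall>v. \<exists>g'. (g' = L \<or> cinf_on S g') \<and> (\<forall>x\<in>S. fd h x v = g' x))" by blast
qed simp

lemma cinf_snd_nth:
  assumes S: "open S"
  shows "cinf_on S (\<lambda>q::(real^'n::finite) \<times> (real^'n). snd q $ a)"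
proof -
  have "linear (\<lambda>q::(real^'n) \<times> (real^'n). snd q $ a)"
    using bounded_linear_compose[OF bounded_linear_vec_nth bounded_linear_snd, of a]
    by (rule bounded_linear.linear)
  then show ?thesis by (rule cinf_linear[OF S])
qed

lemma cinf_fst_comp:
  assumes U: "open U" and g: "cinf_on U g"
  shows "cinf_on (U \<times> UNIV) (\<lambda>q. g (fst q))"
  by (rule cinf_comp_linear[OF U open_Times[OF U open_UNIV] g]) (auto simp: linear_fst)

lemma Eh_decomp: "Eh Gam j q = (axis j 1, 0) + (\<Sum>h\<in>UNIV. (\<Sum>a\<in>UNIV. snd q $ a * Gam a h j (fst q)) *\<^sub>R (0, axis h 1))"
  unfolding Eh_def
  by (simp add: prod_eq_iff fst_sum snd_sum) (subst vec_lambda_sum, simp)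

lemma cinf_Eh:
  assumes U: "open U" and G: "\<And>h i j. cinf_on U (Gam h i j)"
  shows "cinf_on (U \<times> UNIV) (Eh Gam j)"
proof -
  have T: "open (U \<times> (UNIV::(real^'a) set))" by (rule open_Times[OF U open_UNIV])
  have "cinf_on (U \<times> UNIV) (\<lambda>q. (axis j 1, 0) + (\<Sum>h\<in>UNIV. (\<Sum>a\<in>UNIV. snd q $ a * Gam a h j (fst q)) *\<^sub>R (0, axis h (1::real))))"
    by (intro cinf_add cinf_const cinf_sum cinf_scaleR cinf_mult cinf_snd_nth cinf_fst_comp T U G)
  then show ?thesis by (simp add: Eh_decomp[abs_def])
qed

lemma cinf_FF:
  assumes U: "open U" and G: "\<And>h i j. cinf_on U (Gam h i j)" and f: "cinf_on U f" and g: "cinf_on U g"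
  shows "cinf_on (U \<times> UNIV) (FF Gam f g)"
proof -
  have T: "open (U \<times> (UNIV::(real^'a) set))" by (rule open_Times[OF U open_UNIV])
  have fj: "\<And>j. cinf_on U (\<lambda>x. f x $ j)" "\<And>j. cinf_on U (\<lambda>x. g x $ j)"
    using cinf_inner[OF U f] cinf_inner[OF U g] by (simp_all add: inner_axis[where y=1, symmetric] cart_eq_inner_axis)
  show ?thesis
    unfolding FF_def Phi_def Ev_def
    by (intro cinf_add cinf_sum cinf_scaleR cinf_fst_comp cinf_Eh cinf_const T U G fj)
qed


lemma cot_local:
  assumes S: "open S" and q: "q \<in> S" and YY: "\<And>q. q \<in> S \<Longrightarrow> Y q = Y' q"
  shows "cot_conn Gam c X Y q = cot_conn Gam c X Y' q"
proof -
  have h: "\<And>j. fd (hcomp Y j) q = fd (hcomp Y' j) q"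
    by (rule fd_local[OF S q]) (simp add: hcomp_def YY)
  have v: "\<And>j. fd (vcomp Gam Y j) q = fd (vcomp Gam Y' j) q"
    by (rule fd_local[OF S q]) (simp add: vcomp_def YY)
  show ?thesis unfolding cot_conn_def h v by (simp add: hcomp_def vcomp_def YY[OF q])
qed

lemma cinf_pd:
  assumes U: "open U" and f: "cinf_on U f"
  shows "cinf_on U (pd i f)"
  unfolding pd_def[abs_def] by (rule cinf_dir[OF f])

lemma cinf_cov_c:
  assumes U: "open U" and G: "\<And>h i j. cinf_on U (Gam h i j)" and C: "\<And>i j. cinf_on U (c i j)"
  shows "cinf_on U (cov_c Gam c i j k)"
  unfolding cov_c_def[abs_def]
  by (intro cinf_minus cinf_sum cinf_mult cinf_pd U G C)

lemma cinf_Gs: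
  assumes U: "open U" and G: "\<And>h i j. cinf_on U (Gam h i j)"
  shows "cinf_on U (\<lambda>x. Gs Gam x a b)"
  unfolding Gs_def by (intro cinf_vec cinf_sum cinf_mult cinf_const U G)

lemma cinf_divc:
  assumes U: "open U" and f: "cinf_on U (f::_\<Rightarrow>real)"
  shows "cinf_on U (\<lambda>x. f x / r)"
  using cinf_mult[OF U f cinf_const[OF U, of "1/r"]] by simp

lemma cinf_Am:
  assumes U: "open U" and G: "\<And>h i j. cinf_on U (Gam h i j)" and C: "\<And>i j. cinf_on U (c i j)"
  shows "cinf_on U (\<lambda>x. Am Gam c x a b)"
  unfolding Am_def Acoef_def
  by (intro cinf_vec cinf_sum cinf_mult cinf_const cinf_divc cinf_add cinf_minus cinf_cov_c U G C)


definition RS :: "('n::finite \<Rightarrow> 'n \<Rightarrow> 'n \<Rightarrow> real^'n \<Rightarrow> real) \<Rightarrow> real^'n \<Rightarrow> real^'n \<Rightarrow> real^'n \<Rightarrow> real^'n \<Rightarrow> real^'n" where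
  "RS Gam x a b v = - fd (\<lambda>x. Gs Gam x b v) x a + Gs Gam x a (Gs Gam x b v)
     + fd (\<lambda>x. Gs Gam x a v) x b - Gs Gam x b (Gs Gam x a v)"

definition BA :: "('n::finite \<Rightarrow> 'n \<Rightarrow> 'n \<Rightarrow> real^'n \<Rightarrow> real) \<Rightarrow> ('n \<Rightarrow> 'n \<Rightarrow> real^'n \<Rightarrow> real) \<Rightarrow> real^'n \<Rightarrow> real^'n \<Rightarrow> real^'n \<Rightarrow> real^'n \<Rightarrow> real^'n" where
  "BA Gam c x a b d = (fd (\<lambda>x. Am Gam c x b d) x a - Gs Gam x a (Am Gam c x b d) + Am Gam c x a (baseG Gam x b d))
     - (fd (\<lambda>x. Am Gam c x a d) x b - Gs Gam x b (Am Gam c x a d) + Am Gam c x b (baseG Gam x a d))"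

abbreviation FC :: "('n::finite \<Rightarrow> 'n \<Rightarrow> 'n \<Rightarrow> real^'n \<Rightarrow> real) \<Rightarrow> real^'n \<Rightarrow> real^'n \<Rightarrow> (real^'n) \<times> (real^'n) \<Rightarrow> (real^'n) \<times> (real^'n)" where
  "FC Gam h v \<equiv> FF Gam (\<lambda>_. h) (\<lambda>_. v)"

lemma baseG_zero_left: "baseG Gam x 0 b = 0"
  unfolding baseG_def by (simp add: vec_eq_iff)
lemma Gs_zero_left: "Gs Gam x 0 b = 0"
  unfolding Gs_def by (simp add: vec_eq_iff)
lemma Am_zero_left: "Am Gam c x 0 b = 0"
  unfolding Am_def by (simp add: vec_eq_iff)
lemma Gs_diff_right: "Gs Gam x a (u - w) = Gs Gam x a u - Gs Gam x a w"
  unfolding Gs_def by (simp add: vec_eq_iff algebra_simps sum_subtractf)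

lemma FC_fst: "fst (FC Gam h v q) = h"
  unfolding FF_def Phi_fst ..

lemma cot_FC:
  "cot_conn Gam c (FC Gam h2 v2) (FC Gam h3 v3) = FF Gam (\<lambda>x. baseG Gam x h2 h3) (\<lambda>x. Am Gam c x h2 h3 - Gs Gam x h2 v3)"
proof
  fix q
  show "cot_conn Gam c (FC Gam h2 v2) (FC Gam h3 v3) q = FF Gam (\<lambda>x. baseG Gam x h2 h3) (\<lambda>x. Am Gam c x h2 h3 - Gs Gam x h2 v3) q"
    unfolding conn_FF[OF has_derivative_const has_derivative_const] FC_fst
    by (simp add: FF_def)
qed

lemma fst_fd_FC:
  assumes "(FC Gam h v has_derivative F') (at q)"
  shows "fst (F' w) = 0"
proof -
  have "((\<lambda>q. fst (FC Gam h v q)) has_derivative (\<lambda>w. fst (F' w))) (at q)"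
    by (rule has_derivative_fst[OF assms])
  then have "((\<lambda>q. h) has_derivative (\<lambda>w. fst (F' w))) (at q)" by (simp add: FC_fst)
  from has_derivative_unique[OF this has_derivative_const] show ?thesis by metis
qed

lemma curv_FC:
  assumes U: "open U" and G: "\<And>h i j. cinf_on U (Gam h i j)" and C: "\<And>i j. cinf_on U (c i j)"
    and q: "q \<in> U \<times> UNIV"
  shows "curv (cot_conn Gam c) (FC Gam h1 v1) (FC Gam h2 v2) (FC Gam h3 v3) q
     = Phi Gam q (RM Gam (fst q) h1 h2 h3) (RS Gam (fst q) h1 h2 v3 + BA Gam c (fst q) h1 h2 h3)"
proof -
  let ?x = "fst q"
  have T: "open (U \<times> (UNIV::(real^'a) set))" by (rule open_Times[OF U open_UNIV])
  have x: "?x \<in> U" using q by auto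
  have cF: "\<And>h v. cinf_on (U \<times> UNIV) (FC Gam h v)" by (intro cinf_FF U G cinf_const)
  have dB: "\<And>a b. ((\<lambda>x. baseG Gam x a b) has_derivative fd (\<lambda>x. baseG Gam x a b) ?x) (at ?x)"
    by (rule cinf_hasd[OF U cinf_baseG[OF U G] x])
  have dG: "\<And>a b. ((\<lambda>x. Gs Gam x a b) has_derivative fd (\<lambda>x. Gs Gam x a b) ?x) (at ?x)"
    by (rule cinf_hasd[OF U cinf_Gs[OF U G] x])
  have dA: "\<And>a b. ((\<lambda>x. Am Gam c x a b) has_derivative fd (\<lambda>x. Am Gam c x a b) ?x) (at ?x)"
    by (rule cinf_hasd[OF U cinf_Am[OF U G C] x])
  have dAG: "\<And>a b v. ((\<lambda>x. Am Gam c x a b - Gs Gam x a v) has_derivative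
      (\<lambda>w. fd (\<lambda>x. Am Gam c x a b) ?x w - fd (\<lambda>x. Gs Gam x a v) ?x w)) (at ?x)"
    by (rule has_derivative_diff[OF dA dG])
  have t1: "\<And>ha va hb vb hc vc. cot_conn Gam c (FC Gam ha va) (cot_conn Gam c (FC Gam hb vb) (FC Gam hc vc)) q
     = Phi Gam q (fd (\<lambda>x. baseG Gam x hb hc) ?x ha + baseG Gam ?x ha (baseG Gam ?x hb hc))
          (fd (\<lambda>x. Am Gam c x hb hc) ?x ha - fd (\<lambda>x. Gs Gam x hb vc) ?x ha
           - Gs Gam ?x ha (Am Gam c ?x hb hc - Gs Gam ?x hb vc) + Am Gam c ?x ha (baseG Gam ?x hb hc))"
    unfolding cot_FC conn_FF[OF dB dAG] FC_fst by simp
  have fl: "fst (lie (FC Gam h1 v1) (FC Gam h2 v2) q) = 0"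
    unfolding lie_def using fst_fd_FC[OF cinf_hasd[OF T cF q]] by simp
  have t3: "cot_conn Gam c (lie (FC Gam h1 v1) (FC Gam h2 v2)) (FC Gam h3 v3) q = 0"
    unfolding conn_FF[OF has_derivative_const has_derivative_const] fl
    by (simp add: baseG_zero_left Gs_zero_left Am_zero_left Phi_zero)
  show ?thesis
    unfolding curv_def t1 t3
    by (simp add: Phi_diff[symmetric] RM_def RS_def BA_def Gs_diff_right algebra_simps)
qed


definition Eterm :: "('n::finite \<Rightarrow> 'n \<Rightarrow> 'n \<Rightarrow> real^'n \<Rightarrow> real) \<Rightarrow> (real^'n) \<times> (real^'n) \<Rightarrow> (real^'n) \<times> (real^'n) \<Rightarrow> (real^'n) \<times> (real^'n) \<Rightarrow> 'n \<Rightarrow> real" where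
  "Eterm Gam q w y j = (\<Sum>a\<in>UNIV. \<Sum>h\<in>UNIV. snd w $ a * Gam a j h (fst q) * fst y $ h
      + snd q $ a * fd (Gam a j h) (fst q) (fst w) * fst y $ h)"

definition RT :: "('n::finite \<Rightarrow> 'n \<Rightarrow> 'n \<Rightarrow> real^'n \<Rightarrow> real) \<Rightarrow> ('n \<Rightarrow> 'n \<Rightarrow> real^'n \<Rightarrow> real)
    \<Rightarrow> (real^'n) \<times> (real^'n) \<Rightarrow> (real^'n) \<times> (real^'n) \<Rightarrow> (real^'n) \<times> (real^'n) \<Rightarrow> (real^'n) \<times> (real^'n)" where
  "RT Gam c q w y = - (\<Sum>j\<in>UNIV. Eterm Gam q w y j *\<^sub>R Ev j q)
    + (\<Sum>i\<in>UNIV. \<Sum>j\<in>UNIV. (fst w $ i * vcv Gam q y j) *\<^sub>R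
          (\<Sum>h\<in>UNIV. (- Gam j i h (fst q)) *\<^sub>R Ev h q))
    + (\<Sum>i\<in>UNIV. \<Sum>j\<in>UNIV. (fst w $ i * fst y $ j) *\<^sub>R
          ((\<Sum>h\<in>UNIV. Gam h i j (fst q) *\<^sub>R Eh Gam h q)
         + (\<Sum>h\<in>UNIV. ((cov_c Gam c i j h (fst q) + cov_c Gam c j i h (fst q)
                         - cov_c Gam c h i j (fst q)) / 2) *\<^sub>R Ev h q)))"

lemma hasd_snd_nth: "((\<lambda>q::(real^'n::finite) \<times> (real^'n). snd q $ a) has_derivative (\<lambda>w. snd w $ a)) F"
  by (rule bounded_linear_imp_has_derivative[OF bounded_linear_compose[OF bounded_linear_vec_nth bounded_linear_snd, unfolded o_def]])

lemma vcomp_hasd: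
  assumes Y: "(Y has_derivative Y') (at q)"
    and G: "\<And>a j h. (Gam a j h has_derivative fd (Gam a j h) (fst q)) (at (fst q))"
  shows "(vcomp Gam Y j has_derivative (\<lambda>w. vcv Gam q (Y' w) j - Eterm Gam q w (Y q) j)) (at q)"
proof -
  have Yf: "\<And>h. ((\<lambda>q. fst (Y q) $ h) has_derivative (\<lambda>w. fst (Y' w) $ h)) (at q)"
    by (rule hasd_nth[OF has_derivative_fst[OF Y]])
  have Ys: "((\<lambda>q. snd (Y q) $ j) has_derivative (\<lambda>w. snd (Y' w) $ j)) (at q)"
    by (rule hasd_nth[OF has_derivative_snd[OF Y]])
  have Gf: "\<And>a j h. ((\<lambda>q. Gam a j h (fst q)) has_derivative (\<lambda>w. fd (Gam a j h) (fst q) (fst w))) (at q)"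
    by (rule hasd_fst_comp[OF G])
  have "(vcomp Gam Y j has_derivative (\<lambda>w. snd (Y' w) $ j - (\<Sum>a\<in>UNIV. \<Sum>h\<in>UNIV.
        (snd q $ a * Gam a j h (fst q)) * fst (Y' w) $ h
      + (snd q $ a * fd (Gam a j h) (fst q) (fst w) + snd w $ a * Gam a j h (fst q)) * fst (Y q) $ h))) (at q)"
    unfolding vcomp_def
    by (intro has_derivative_diff Ys has_derivative_sum has_derivative_mult Yf Gf hasd_snd_nth)
  moreover have "(\<lambda>w. snd (Y' w) $ j - (\<Sum>a\<in>UNIV. \<Sum>h\<in>UNIV.
        (snd q $ a * Gam a j h (fst q)) * fst (Y' w) $ h
      + (snd q $ a * fd (Gam a j h) (fst q) (fst w) + snd w $ a * Gam a j h (fst q)) * fst (Y q) $ h))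
     = (\<lambda>w. vcv Gam q (Y' w) j - Eterm Gam q w (Y q) j)"
    unfolding vcv_def Eterm_def by (auto simp: algebra_simps sum.distrib sum_subtractf)
  ultimately show ?thesis by simp
qed

lemma cot_RT:
  assumes Y: "(Y has_derivative Y') (at q)"
    and G: "\<And>a j h. (Gam a j h has_derivative fd (Gam a j h) (fst q)) (at (fst q))"
  shows "cot_conn Gam c X Y q = Y' (X q) + RT Gam c q (X q) (Y q)"
proof -
  have dh: "\<And>j. fd (hcomp Y j) q = (\<lambda>w. fst (Y' w) $ j)"
    unfolding hcomp_def[abs_def] by (rule fd_nth[OF has_derivative_fst[OF Y]])
  have dv: "\<And>j. fd (vcomp Gam Y j) q = (\<lambda>w. vcv Gam q (Y' w) j - Eterm Gam q w (Y q) j)"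
    by (rule frechet_derivative_at[symmetric, OF vcomp_hasd[OF Y G]])
  have rec: "(\<Sum>j\<in>UNIV. fst (Y' (X q)) $ j *\<^sub>R Eh Gam j q) + (\<Sum>j\<in>UNIV. vcv Gam q (Y' (X q)) j *\<^sub>R Ev j q) = Y' (X q)"
    using Phi_recon[of Gam q "Y' (X q)"] unfolding Phi_def by simp
  have gen: "\<And>A B C T3 T4 (d::'z::ab_group_add). A + B = d \<Longrightarrow> A + (B - C) + T3 + T4 = d + (- C + T3 + T4)"
    by (simp add: algebra_simps)
  show ?thesis
    unfolding cot_conn_def dh dv RT_def hcomp_def vcomp_vcv scaleR_diff_left sum_subtractf
    by (rule gen[OF rec])
qed


lemma vcv_add: "vcv Gam q (y1 + y2) j = vcv Gam q y1 j + vcv Gam q y2 j"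
  unfolding vcv_def by (simp add: algebra_simps sum.distrib)
lemma vcv_scale: "vcv Gam q (r *\<^sub>R y) j = r * vcv Gam q y j"
  unfolding vcv_def by (simp add: algebra_simps sum_distrib_left)

lemma Eterm_add_y: "Eterm Gam q w (y1 + y2) j = Eterm Gam q w y1 j + Eterm Gam q w y2 j"
  unfolding Eterm_def by (simp add: algebra_simps sum.distrib)
lemma Eterm_scale_y: "Eterm Gam q w (r *\<^sub>R y) j = r * Eterm Gam q w y j"
  unfolding Eterm_def by (simp add: algebra_simps sum_distrib_left)

lemma Eterm_add_w:
  assumes G: "\<And>a j h. (Gam a j h has_derivative fd (Gam a j h) (fst q)) (at (fst q))"
  shows "Eterm Gam q (w1 + w2) y j = Eterm Gam q w1 y j + Eterm Gam q w2 y j"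
proof -
  have l: "\<And>a j h. linear (fd (Gam a j h) (fst q))" by (rule has_derivative_linear[OF G])
  show ?thesis unfolding Eterm_def by (simp add: linear_add[OF l] algebra_simps sum.distrib)
qed
lemma Eterm_scale_w:
  assumes G: "\<And>a j h. (Gam a j h has_derivative fd (Gam a j h) (fst q)) (at (fst q))"
  shows "Eterm Gam q (r *\<^sub>R w) y j = r * Eterm Gam q w y j"
proof -
  have l: "\<And>a j h. linear (fd (Gam a j h) (fst q))" by (rule has_derivative_linear[OF G])
  show ?thesis unfolding Eterm_def by (simp add: linear_scale[OF l] algebra_simps sum_distrib_left)
qed

lemma RT_bilinear:
  assumes G: "\<And>a j h. (Gam a j h has_derivative fd (Gam a j h) (fst q)) (at (fst q))"
  shows "bilinear (RT Gam c q)"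
  unfolding bilinear_def linear_iff
proof (intro conjI allI)
  fix w y1 y2 :: "(real^'a) \<times> (real^'a)"
  show "RT Gam c q w (y1 + y2) = RT Gam c q w y1 + RT Gam c q w y2"
    unfolding RT_def by (simp add: Eterm_add_y vcv_add distrib_left scaleR_add_left sum.distrib)
next
  fix w y :: "(real^'a) \<times> (real^'a)" and r :: real
  show "RT Gam c q w (r *\<^sub>R y) = r *\<^sub>R RT Gam c q w y"
    unfolding RT_def by (simp add: Eterm_scale_y vcv_scale scaleR_sum_right scaleR_add_right scaleR_diff_right scaleR_scaleR mult_ac)
next
  fix y w1 w2 :: "(real^'a) \<times> (real^'a)"
  show "RT Gam c q (w1 + w2) y = RT Gam c q w1 y + RT Gam c q w2 y"
    unfolding RT_def by (simp add: Eterm_add_w[OF G] distrib_right scaleR_add_left sum.distrib)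
next
  fix y w :: "(real^'a) \<times> (real^'a)" and r :: real
  show "RT Gam c q (r *\<^sub>R w) y = r *\<^sub>R RT Gam c q w y"
    unfolding RT_def by (simp add: Eterm_scale_w[OF G] scaleR_sum_right scaleR_add_right scaleR_diff_right scaleR_scaleR mult_ac)
qed


lemma cinf_uminus:
  assumes S: "open S" and f: "cinf_on S f"
  shows "cinf_on S (\<lambda>x. - f x)"
  using cinf_scaleR[OF S cinf_const[OF S, of "-1::real"] f] by simp

lemma cinf_RT:
  assumes U: "open U" and G: "\<And>h i j. cinf_on U (Gam h i j)" and C: "\<And>i j. cinf_on U (c i j)"
  shows "cinf_on (U \<times> UNIV) (\<lambda>q. RT Gam c q a b)"
proof -
  have T: "open (U \<times> (UNIV::(real^'a) set))" by (rule open_Times[OF U open_UNIV])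
  show ?thesis
    unfolding RT_def Eterm_def vcv_def Ev_def
    by (intro cinf_add cinf_minus cinf_uminus cinf_sum cinf_scaleR cinf_mult cinf_const cinf_divc
        cinf_snd_nth cinf_Eh cinf_fst_comp cinf_dir cinf_cov_c T U G C)
qed

lemma agrees_cot:
  assumes U: "open U" and G: "\<And>h i j. cinf_on U (Gam h i j)"
  shows "agrees (cot_conn Gam c) (\<lambda>a b q. RT Gam c q a b) (U \<times> UNIV)"
  unfolding agrees_def
proof (intro allI impI ballI)
  fix X Y :: "(real^'a) \<times> (real^'a) \<Rightarrow> (real^'a) \<times> (real^'a)" and q :: "(real^'a) \<times> (real^'a)"
  assume X: "cinf_on (U \<times> UNIV) X" and Y: "cinf_on (U \<times> UNIV) Y" and q: "q \<in> U \<times> UNIV"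
  have T: "open (U \<times> (UNIV::(real^'a) set))" by (rule open_Times[OF U open_UNIV])
  have x: "fst q \<in> U" using q by auto
  have Gd: "\<And>a j h. (Gam a j h has_derivative fd (Gam a j h) (fst q)) (at (fst q))"
    by (rule cinf_hasd[OF U G x])
  show "cot_conn Gam c X Y q = conB (\<lambda>a b q. RT Gam c q a b) X Y q"
    unfolding cot_RT[OF cinf_hasd[OF T Y q] Gd] conB_def Bc_bilinear[of "RT Gam c", OF RT_bilinear[of Gam q c, OF Gd]] ..
qed


lemma Kf_cot_Phi:
  assumes U: "open U" and G: "\<And>h i j. cinf_on U (Gam h i j)" and C: "\<And>i j. cinf_on U (c i j)"
    and q: "q \<in> U \<times> UNIV"
  shows "Kf (\<lambda>a b q. RT Gam c q a b) q (Phi Gam q h1 v1) (Phi Gam q h2 v2) (Phi Gam q h3 v3)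
     = Phi Gam q (RM Gam (fst q) h1 h2 h3) (RS Gam (fst q) h1 h2 v3 + BA Gam c (fst q) h1 h2 h3)"
proof -
  have T: "open (U \<times> (UNIV::(real^'a) set))" by (rule open_Times[OF U open_UNIV])
  have cF: "\<And>h v. cinf_on (U \<times> UNIV) (FC Gam h v)" by (intro cinf_FF U G cinf_const)
  have "curv (cot_conn Gam c) (FC Gam h1 v1) (FC Gam h2 v2) (FC Gam h3 v3) q
     = Kf (\<lambda>a b q. RT Gam c q a b) q (Phi Gam q h1 v1) (Phi Gam q h2 v2) (Phi Gam q h3 v3)"
    using curv_D[OF T cinf_RT[OF U G C] agrees_cot[OF U G] cF cF cF q] by (simp add: FF_def)
  then show ?thesis using curv_FC[OF U G C q] by simp
qed

lemma Gs_adj: "Gs Gam x a v \<bullet> u = v \<bullet> baseG Gam x a u"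
proof -
  have "Gs Gam x a v \<bullet> u = (\<Sum>h\<in>UNIV. \<Sum>i\<in>UNIV. \<Sum>j\<in>UNIV. a $ i * v $ j * Gam j i h x * u $ h)"
    unfolding inner_vec_def Gs_def by (simp add: sum_distrib_right)
  also have "\<dots> = (\<Sum>i\<in>UNIV. \<Sum>h\<in>UNIV. \<Sum>j\<in>UNIV. a $ i * v $ j * Gam j i h x * u $ h)"
    by (rule sum.swap)
  also have "\<dots> = (\<Sum>i\<in>UNIV. \<Sum>j\<in>UNIV. \<Sum>h\<in>UNIV. a $ i * v $ j * Gam j i h x * u $ h)"
    by (rule sum.cong[OF refl], rule sum.swap)
  also have "\<dots> = (\<Sum>j\<in>UNIV. \<Sum>i\<in>UNIV. \<Sum>h\<in>UNIV. a $ i * v $ j * Gam j i h x * u $ h)"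
    by (rule sum.swap)
  also have "\<dots> = v \<bullet> baseG Gam x a u"
    unfolding inner_vec_def baseG_def by (simp add: sum_distrib_left mult_ac)
  finally show ?thesis .
qed

lemma RS_adj:
  assumes U: "open U" and G: "\<And>h i j. cinf_on U (Gam h i j)" and x: "x \<in> U"
  shows "RS Gam x a b v \<bullet> u = - (v \<bullet> RM Gam x a b u)"
proof -
  have dGs: "\<And>a b w. fd (\<lambda>x. Gs Gam x b v) x a \<bullet> u = v \<bullet> fd (\<lambda>x. baseG Gam x b u) x a"
  proof -
    fix a b w
    have e1: "fd (\<lambda>x. Gs Gam x b v \<bullet> u) x = (\<lambda>w. fd (\<lambda>x. Gs Gam x b v) x w \<bullet> u)"
      by (rule fd_inner_b[OF cinf_hasd[OF U cinf_Gs[where a=b and b=v, OF U G] x]])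
    have e2: "fd (\<lambda>x. baseG Gam x b u \<bullet> v) x = (\<lambda>w. fd (\<lambda>x. baseG Gam x b u) x w \<bullet> v)"
      by (rule fd_inner_b[OF cinf_hasd[OF U cinf_baseG[where a=b and b=u, OF U G] x]])
    have "fd (\<lambda>x. Gs Gam x b v) x a \<bullet> u = fd (\<lambda>x. Gs Gam x b v \<bullet> u) x a"
      using e1 by simp
    also have "\<dots> = fd (\<lambda>x. baseG Gam x b u \<bullet> v) x a"
      by (rule arg_cong[where f="\<lambda>f. fd f x a"], rule ext, subst Gs_adj, rule inner_commute)
    also have "\<dots> = fd (\<lambda>x. baseG Gam x b u) x a \<bullet> v"
      using e2 by simp
    finally show "fd (\<lambda>x. Gs Gam x b v) x a \<bullet> u = v \<bullet> fd (\<lambda>x. baseG Gam x b u) x a"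
      by (simp add: inner_commute)
  qed
  have g2: "Gs Gam x a (Gs Gam x b v) \<bullet> u = v \<bullet> baseG Gam x b (baseG Gam x a u)"
    by (simp add: Gs_adj)
  have g3: "Gs Gam x b (Gs Gam x a v) \<bullet> u = v \<bullet> baseG Gam x a (baseG Gam x b u)"
    by (simp add: Gs_adj)
  show ?thesis
    unfolding RS_def RM_def
    by (simp add: inner_add_left inner_diff_left inner_add_right inner_diff_right dGs g2 g3 del: inner_minus_left)
qed

context
  fixes G :: "'n::finite \<Rightarrow> 'n \<Rightarrow> 'n \<Rightarrow> real"
    and dG :: "'n \<Rightarrow> 'n \<Rightarrow> 'n \<Rightarrow> 'n \<Rightarrow> real"
    and cc :: "'n \<Rightarrow> 'n \<Rightarrow> real"
    and dc :: "'n \<Rightarrow> 'n \<Rightarrow> 'n \<Rightarrow> real"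
    and ddc :: "'n \<Rightarrow> 'n \<Rightarrow> 'n \<Rightarrow> 'n \<Rightarrow> real"
begin

definition "aC i j h = dc i j h - (\<Sum>m\<in>UNIV. G m i j * cc m h) - (\<Sum>m\<in>UNIV. G m i h * cc j m)"
definition "adC l i j h = ddc l i j h - (\<Sum>m\<in>UNIV. dG l m i j * cc m h + G m i j * dc l m h)
   - (\<Sum>m\<in>UNIV. dG l m i h * cc j m + G m i h * dc l j m)"
definition "acov2 l i j h = adC l i j h - (\<Sum>m\<in>UNIV. G m l i * aC m j h)
   - (\<Sum>m\<in>UNIV. G m l j * aC i m h) - (\<Sum>m\<in>UNIV. G m l h * aC i j m)"
definition "aRc l i j m = dG l m i j - dG i m l j + (\<Sum>n\<in>UNIV. G m l n * G n i j) - (\<Sum>n\<in>UNIV. G m i n * G n l j)"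
definition "aA i j h = (aC i j h + aC j i h - aC h i j) / 2"
definition "adA l i j h = (adC l i j h + adC l j i h - adC l h i j) / 2"
definition "aBco l i j h = adA l i j h - (\<Sum>m\<in>UNIV. aA i j m * G m l h) + (\<Sum>m\<in>UNIV. G m i j * aA l m h)
   - (adA i l j h - (\<Sum>m\<in>UNIV. aA l j m * G m i h) + (\<Sum>m\<in>UNIV. G m l j * aA i m h))"

lemma alg1:
  assumes tor: "\<And>m i j. G m i j = G m j i"
  shows "2 * aBco l i j h = (acov2 l i j h + acov2 l j i h - acov2 l h i j) - (acov2 i l j h + acov2 i j l h - acov2 i h l j)"
proof -
  have e1: "\<And>a b c d. 2 * (\<Sum>m\<in>UNIV. aA a b m * G m c d) = (\<Sum>m\<in>UNIV. G m c d * aC a b m) + (\<Sum>m\<in>UNIV. G m c d * aC b a m) - (\<Sum>m\<in>UNIV. G m c d * aC m a b)"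
  proof -
    fix a b c d
    have "2 * (\<Sum>m\<in>UNIV. aA a b m * G m c d) = (\<Sum>m\<in>UNIV. G m c d * aC a b m + G m c d * aC b a m - G m c d * aC m a b)"
      unfolding sum_distrib_left by (rule sum.cong) (simp_all add: aA_def field_simps)
    then show "2 * (\<Sum>m\<in>UNIV. aA a b m * G m c d) = (\<Sum>m\<in>UNIV. G m c d * aC a b m) + (\<Sum>m\<in>UNIV. G m c d * aC b a m) - (\<Sum>m\<in>UNIV. G m c d * aC m a b)"
      by (simp add: sum.distrib sum_subtractf)
  qed
  have e2: "\<And>a b c d. 2 * (\<Sum>m\<in>UNIV. G m a b * aA c m d) = (\<Sum>m\<in>UNIV. G m a b * aC c m d) + (\<Sum>m\<in>UNIV. G m a b * aC m c d) - (\<Sum>m\<in>UNIV. G m a b * aC d c m)"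
  proof -
    fix a b c d
    have "2 * (\<Sum>m\<in>UNIV. G m a b * aA c m d) = (\<Sum>m\<in>UNIV. G m a b * aC c m d + G m a b * aC m c d - G m a b * aC d c m)"
      unfolding sum_distrib_left by (rule sum.cong) (simp_all add: aA_def field_simps)
    then show "2 * (\<Sum>m\<in>UNIV. G m a b * aA c m d) = (\<Sum>m\<in>UNIV. G m a b * aC c m d) + (\<Sum>m\<in>UNIV. G m a b * aC m c d) - (\<Sum>m\<in>UNIV. G m a b * aC d c m)"
      by (simp add: sum.distrib sum_subtractf)
  qed
  have e3: "\<And>a b c d. 2 * adA a b c d = adC a b c d + adC a c b d - adC a d b c"
    unfolding adA_def by simp
  have "2 * aBco l i j h = 2 * adA l i j h - 2 * (\<Sum>m\<in>UNIV. aA i j m * G m l h) + 2 * (\<Sum>m\<in>UNIV. G m i j * aA l m h)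
     - (2 * adA i l j h - 2 * (\<Sum>m\<in>UNIV. aA l j m * G m i h) + 2 * (\<Sum>m\<in>UNIV. G m l j * aA i m h))"
    unfolding aBco_def by (simp add: algebra_simps)
  also have "\<dots> = (acov2 l i j h + acov2 l j i h - acov2 l h i j) - (acov2 i l j h + acov2 i j l h - acov2 i h l j)"
    unfolding e1 e2 e3 acov2_def by (simp add: tor[of _ i l] algebra_simps)
  finally show ?thesis .
qed


lemma dsw: "(\<Sum>m\<in>UNIV. F m * (\<Sum>n\<in>UNIV. H m n)) = (\<Sum>n\<in>UNIV. (\<Sum>m\<in>UNIV. F m * H m n))"
  for F :: "'n \<Rightarrow> real" by (simp add: sum_distrib_left) (rule sum.swap)

lemma alg2:
  assumes tor: "\<And>m i j. G m i j = G m j i"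
    and sym: "ddc l i j h = ddc i l j h"
  shows "acov2 l i j h - acov2 i l j h = - (\<Sum>m\<in>UNIV. aRc l i j m * cc m h) - (\<Sum>m\<in>UNIV. aRc l i h m * cc j m)"
proof -
  define D1 where "D1 = (\<Sum>m\<in>UNIV. G m l j * (\<Sum>n\<in>UNIV. G n i m * cc n h))"
  define D2 where "D2 = (\<Sum>m\<in>UNIV. G m l j * (\<Sum>n\<in>UNIV. G n i h * cc m n))"
  define D3 where "D3 = (\<Sum>m\<in>UNIV. G m i j * (\<Sum>n\<in>UNIV. G n l m * cc n h))"
  define D4 where "D4 = (\<Sum>m\<in>UNIV. G m i j * (\<Sum>n\<in>UNIV. G n l h * cc m n))"
  define D5 where "D5 = (\<Sum>m\<in>UNIV. G m l h * (\<Sum>n\<in>UNIV. G n i j * cc n m))"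
  define D6 where "D6 = (\<Sum>m\<in>UNIV. G m l h * (\<Sum>n\<in>UNIV. G n i m * cc j n))"
  define D7 where "D7 = (\<Sum>m\<in>UNIV. G m i h * (\<Sum>n\<in>UNIV. G n l j * cc n m))"
  define D8 where "D8 = (\<Sum>m\<in>UNIV. G m i h * (\<Sum>n\<in>UNIV. G n l m * cc j n))"
  define R1 where "R1 = (\<Sum>m\<in>UNIV. (\<Sum>n\<in>UNIV. G m l n * G n i j) * cc m h)"
  define R2 where "R2 = (\<Sum>m\<in>UNIV. (\<Sum>n\<in>UNIV. G m i n * G n l j) * cc m h)"
  define R3 where "R3 = (\<Sum>m\<in>UNIV. (\<Sum>n\<in>UNIV. G m l n * G n i h) * cc j m)"
  define R4 where "R4 = (\<Sum>m\<in>UNIV. (\<Sum>n\<in>UNIV. G m i n * G n l h) * cc j m)"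
  have D27: "D2 = D7" unfolding D2_def D7_def
    by (simp add: sum_distrib_left mult_ac) (subst sum.swap, simp add: mult_ac)
  have D45: "D4 = D5" unfolding D4_def D5_def
    by (simp add: sum_distrib_left mult_ac) (subst sum.swap, simp add: mult_ac)
  have D1R2: "D1 = R2" unfolding D1_def R2_def
    by (simp add: sum_distrib_left sum_distrib_right mult_ac) (subst sum.swap, simp add: mult_ac)
  have D3R1: "D3 = R1" unfolding D3_def R1_def
    by (simp add: sum_distrib_left sum_distrib_right mult_ac) (subst sum.swap, simp add: mult_ac)
  have D6R4: "D6 = R4" unfolding D6_def R4_def
    by (simp add: sum_distrib_left sum_distrib_right mult_ac) (subst sum.swap, simp add: mult_ac)
  have D8R3: "D8 = R3" unfolding D8_def R3_def
    by (simp add: sum_distrib_left sum_distrib_right mult_ac) (subst sum.swap, simp add: mult_ac)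
  have S1: "(\<Sum>m\<in>UNIV. G m i l * aC m j h) = (\<Sum>m\<in>UNIV. G m l i * aC m j h)"
    by (simp add: tor[of _ i l])
  have S2: "(\<Sum>m\<in>UNIV. G m l j * aC i m h) = (\<Sum>m\<in>UNIV. G m l j * dc i m h) - D1 - D2"
    unfolding aC_def D1_def D2_def by (simp add: algebra_simps sum.distrib sum_subtractf sum_distrib_left)
  have S3: "(\<Sum>m\<in>UNIV. G m l h * aC i j m) = (\<Sum>m\<in>UNIV. G m l h * dc i j m) - D5 - D6"
    unfolding aC_def D5_def D6_def by (simp add: algebra_simps sum.distrib sum_subtractf sum_distrib_left)
  have S2': "(\<Sum>m\<in>UNIV. G m i j * aC l m h) = (\<Sum>m\<in>UNIV. G m i j * dc l m h) - D3 - D4"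
    unfolding aC_def D3_def D4_def by (simp add: algebra_simps sum.distrib sum_subtractf sum_distrib_left)
  have S3': "(\<Sum>m\<in>UNIV. G m i h * aC l j m) = (\<Sum>m\<in>UNIV. G m i h * dc l j m) - D7 - D8"
    unfolding aC_def D7_def D8_def by (simp add: algebra_simps sum.distrib sum_subtractf sum_distrib_left)
  have lhs: "acov2 l i j h - acov2 i l j h =
      (adC l i j h - adC i l j h) - ((\<Sum>m\<in>UNIV. G m l j * dc i m h) - D1 - D2) - ((\<Sum>m\<in>UNIV. G m l h * dc i j m) - D5 - D6)
      + ((\<Sum>m\<in>UNIV. G m i j * dc l m h) - D3 - D4) + ((\<Sum>m\<in>UNIV. G m i h * dc l j m) - D7 - D8)"
    unfolding acov2_def S1 S2 S3 S2' S3' by simp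
  have adC: "adC l i j h - adC i l j h =
     - (\<Sum>m\<in>UNIV. dG l m i j * cc m h) - (\<Sum>m\<in>UNIV. G m i j * dc l m h)
     - (\<Sum>m\<in>UNIV. dG l m i h * cc j m) - (\<Sum>m\<in>UNIV. G m i h * dc l j m)
     + (\<Sum>m\<in>UNIV. dG i m l j * cc m h) + (\<Sum>m\<in>UNIV. G m l j * dc i m h)
     + (\<Sum>m\<in>UNIV. dG i m l h * cc j m) + (\<Sum>m\<in>UNIV. G m l h * dc i j m)"
    apply (simp only: adC_def sum.distrib)
    using sym apply (simp only: )
    done
  have rhs: "- (\<Sum>m\<in>UNIV. aRc l i j m * cc m h) - (\<Sum>m\<in>UNIV. aRc l i h m * cc j m) =
     - (\<Sum>m\<in>UNIV. dG l m i j * cc m h) + (\<Sum>m\<in>UNIV. dG i m l j * cc m h) - R1 + R2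
     - (\<Sum>m\<in>UNIV. dG l m i h * cc j m) + (\<Sum>m\<in>UNIV. dG i m l h * cc j m) - R3 + R4"
  proof -
    have r1: "(\<Sum>m\<in>UNIV. aRc l i j m * cc m h) = (\<Sum>m\<in>UNIV. dG l m i j * cc m h) - (\<Sum>m\<in>UNIV. dG i m l j * cc m h) + R1 - R2"
      unfolding aRc_def R1_def R2_def by (simp only: left_diff_distrib distrib_right sum.distrib sum_subtractf)
    have r2: "(\<Sum>m\<in>UNIV. aRc l i h m * cc j m) = (\<Sum>m\<in>UNIV. dG l m i h * cc j m) - (\<Sum>m\<in>UNIV. dG i m l h * cc j m) + R3 - R4"
      unfolding aRc_def R3_def R4_def by (simp only: left_diff_distrib distrib_right sum.distrib sum_subtractf)
    show ?thesis unfolding r1 r2 by linarith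
  qed
  show ?thesis unfolding lhs adC rhs D27 D45 D1R2 D3R1 D6R4 D8R3 by simp
qed


lemma alg3:
  assumes tor: "\<And>m i j. G m i j = G m j i"
    and sym: "ddc l i j h = ddc i l j h"
    and hypA: "(acov2 l j i h - acov2 l h i j) - (acov2 i j l h - acov2 i h l j)
       - (\<Sum>m\<in>UNIV. aRc l i j m * cc m h) - (\<Sum>m\<in>UNIV. aRc l i h m * cc j m) = 0"
  shows "aBco l i j h = 0"
  using alg1[OF tor, of l i j h] alg2[OF tor sym] hypA by linarith

end

lemma ifz1: "(if P then a else 0) * (x::real) = (if P then a * x else 0)" by simp
lemma sum_ifP: "(\<Sum>j\<in>A. if P then f j else (0::'a::comm_monoid_add)) = (if P then \<Sum>j\<in>A. f j else 0)" by simp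
lemma baseG_axis: "baseG Gam y (axis i 1) (axis j 1) = (\<chi> m. Gam m i j y)"
  by (simp add: baseG_def axis_def vec_eq_iff mult_if_delta ifz1 sum_ifP sum.delta cong: if_cong)
lemma baseG_axis1: "baseG Gam y (axis i 1) v = (\<chi> m. \<Sum>j\<in>UNIV. v $ j * Gam m i j y)"
  by (simp add: baseG_def axis_def vec_eq_iff mult_if_delta ifz1 sum_ifP sum.delta cong: if_cong)

lemma fd_coord:
  fixes f :: "real^'n::finite \<Rightarrow> real"
  assumes "(f has_derivative f') (at x)"
  shows "f' a = (\<Sum>l\<in>UNIV. a $ l * f' (axis l 1))"
proof -
  have lin: "linear f'" by (rule has_derivative_linear[OF assms])
  have "f' a = f' (\<Sum>l\<in>UNIV. a $ l *\<^sub>R axis l 1)" by (simp add: sum_axis)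
  also have "\<dots> = (\<Sum>l\<in>UNIV. a $ l * f' (axis l 1))" by (simp add: linear_sum[OF lin] linear_scale[OF lin])
  finally show ?thesis .
qed

lemma LA: "(\<Sum>i\<in>UNIV. \<Sum>j\<in>UNIV. b i * d j * (\<Sum>l\<in>UNIV. a l * F l i j)) =
  (\<Sum>l\<in>UNIV. \<Sum>i\<in>UNIV. \<Sum>j\<in>UNIV. a l * b i * d j * F l i j)" for a b d :: "'n::finite \<Rightarrow> real"
proof -
  have "(\<Sum>i\<in>UNIV. \<Sum>j\<in>UNIV. b i * d j * (\<Sum>l\<in>UNIV. a l * F l i j)) = (\<Sum>i\<in>UNIV. \<Sum>j\<in>UNIV. \<Sum>l\<in>UNIV. a l * b i * d j * F l i j)"
    by (simp add: sum_distrib_left mult_ac)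
  also have "\<dots> = (\<Sum>i\<in>UNIV. \<Sum>l\<in>UNIV. \<Sum>j\<in>UNIV. a l * b i * d j * F l i j)"
    by (rule sum.cong[OF refl], rule sum.swap)
  also have "\<dots> = (\<Sum>l\<in>UNIV. \<Sum>i\<in>UNIV. \<Sum>j\<in>UNIV. a l * b i * d j * F l i j)"
    by (rule sum.swap)
  finally show ?thesis .
qed

lemma LB: "(\<Sum>l\<in>UNIV. \<Sum>m\<in>UNIV. a l * (\<Sum>i\<in>UNIV. \<Sum>j\<in>UNIV. b i * d j * H i j m) * K l m) =
  (\<Sum>l\<in>UNIV. \<Sum>i\<in>UNIV. \<Sum>j\<in>UNIV. a l * b i * d j * (\<Sum>m\<in>UNIV. H i j m * K l m))" for a b d :: "'n::finite \<Rightarrow> real"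
proof (rule sum.cong[OF refl])
  fix l
  have "(\<Sum>m\<in>UNIV. a l * (\<Sum>i\<in>UNIV. \<Sum>j\<in>UNIV. b i * d j * H i j m) * K l m) =
      (\<Sum>m\<in>UNIV. \<Sum>i\<in>UNIV. \<Sum>j\<in>UNIV. a l * b i * d j * (H i j m * K l m))"
    by (simp add: sum_distrib_left sum_distrib_right mult_ac)
  also have "\<dots> = (\<Sum>i\<in>UNIV. \<Sum>m\<in>UNIV. \<Sum>j\<in>UNIV. a l * b i * d j * (H i j m * K l m))"
    by (rule sum.swap)
  also have "\<dots> = (\<Sum>i\<in>UNIV. \<Sum>j\<in>UNIV. \<Sum>m\<in>UNIV. a l * b i * d j * (H i j m * K l m))"
    by (rule sum.cong[OF refl], rule sum.swap)
  also have "\<dots> = (\<Sum>i\<in>UNIV. \<Sum>j\<in>UNIV. a l * b i * d j * (\<Sum>m\<in>UNIV. H i j m * K l m))"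
    by (simp add: sum_distrib_left)
  finally show "(\<Sum>m\<in>UNIV. a l * (\<Sum>i\<in>UNIV. \<Sum>j\<in>UNIV. b i * d j * H i j m) * K l m) =
      (\<Sum>i\<in>UNIV. \<Sum>j\<in>UNIV. a l * b i * d j * (\<Sum>m\<in>UNIV. H i j m * K l m))" .
qed

lemma LAs: "(\<Sum>i\<in>UNIV. \<Sum>j\<in>UNIV. a i * d j * (\<Sum>l\<in>UNIV. b l * F l i j)) =
  (\<Sum>l\<in>UNIV. \<Sum>i\<in>UNIV. \<Sum>j\<in>UNIV. a l * b i * d j * F i l j)" for a b d :: "'n::finite \<Rightarrow> real"
  unfolding LA by (subst sum.swap) (simp add: mult_ac)

lemma LBs: "(\<Sum>l\<in>UNIV. \<Sum>m\<in>UNIV. b l * (\<Sum>i\<in>UNIV. \<Sum>j\<in>UNIV. a i * d j * H i j m) * K l m) =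
  (\<Sum>l\<in>UNIV. \<Sum>i\<in>UNIV. \<Sum>j\<in>UNIV. a l * b i * d j * (\<Sum>m\<in>UNIV. H l j m * K i m))" for a b d :: "'n::finite \<Rightarrow> real"
  unfolding LB by (subst sum.swap) (simp add: mult_ac)

lemma comb6:
  fixes P :: "'n::finite \<Rightarrow> 'n \<Rightarrow> 'n \<Rightarrow> real"
  shows "(\<Sum>l\<in>UNIV. \<Sum>i\<in>UNIV. \<Sum>j\<in>UNIV. P l i j * X1 l i j) - (\<Sum>l\<in>UNIV. \<Sum>i\<in>UNIV. \<Sum>j\<in>UNIV. P l i j * X2 l i j)
     + (\<Sum>l\<in>UNIV. \<Sum>i\<in>UNIV. \<Sum>j\<in>UNIV. P l i j * X3 l i j)
     - ((\<Sum>l\<in>UNIV. \<Sum>i\<in>UNIV. \<Sum>j\<in>UNIV. P l i j * Y1 l i j) - (\<Sum>l\<in>UNIV. \<Sum>i\<in>UNIV. \<Sum>j\<in>UNIV. P l i j * Y2 l i j)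
     + (\<Sum>l\<in>UNIV. \<Sum>i\<in>UNIV. \<Sum>j\<in>UNIV. P l i j * Y3 l i j))
   = (\<Sum>l\<in>UNIV. \<Sum>i\<in>UNIV. \<Sum>j\<in>UNIV. P l i j * (X1 l i j - X2 l i j + X3 l i j - (Y1 l i j - Y2 l i j + Y3 l i j)))"
  by (simp add: sum.distrib sum_subtractf algebra_simps)

lemma pd_hasd:
  assumes "(f has_derivative f') (at x)"
  shows "pd l f x = f' (axis l 1)"
  unfolding pd_def using frechet_derivative_at[OF assms] by simp

lemma cov_c_fun: "cov_c Gam c i j h = (\<lambda>x. pd i (c j h) x - (\<Sum>m\<in>UNIV. Gam m i j x * c m h x) - (\<Sum>m\<in>UNIV. Gam m i h x * c j m x))"
  unfolding cov_c_def[abs_def] ..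

context
  fixes U :: "(real^'n::finite) set" and Gam :: "'n \<Rightarrow> 'n \<Rightarrow> 'n \<Rightarrow> real^'n \<Rightarrow> real"
    and c :: "'n \<Rightarrow> 'n \<Rightarrow> real^'n \<Rightarrow> real" and x :: "real^'n"
  assumes U: "open U" and G: "\<And>h i j. cinf_on U (Gam h i j)" and C: "\<And>i j. cinf_on U (c i j)"
    and x: "x \<in> U"
begin

abbreviation "GG \<equiv> (\<lambda>m i j. Gam m i j x)"
abbreviation "dGG \<equiv> (\<lambda>l m i j. pd l (Gam m i j) x)"
abbreviation "ccc \<equiv> (\<lambda>m h. c m h x)"
abbreviation "dcc \<equiv> (\<lambda>l j h. pd l (c j h) x)"
abbreviation "ddcc \<equiv> (\<lambda>l i j h. pd l (pd i (c j h)) x)"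

lemma hG: "(Gam m i j has_derivative fd (Gam m i j) x) (at x)" by (rule cinf_hasd[OF U G x])
lemma hC: "(c j h has_derivative fd (c j h) x) (at x)" by (rule cinf_hasd[OF U C x])
lemma hpC: "(pd i (c j h) has_derivative fd (pd i (c j h)) x) (at x)" by (rule cinf_hasd[OF U cinf_pd[OF U C] x])

lemma aC_eq: "aC GG ccc dcc i j h = cov_c Gam c i j h x"
  unfolding aC_def cov_c_def ..

lemma pd_cov_c: "pd l (cov_c Gam c i j h) x = adC GG dGG ccc dcc ddcc l i j h"
proof -
  have "(cov_c Gam c i j h has_derivative (\<lambda>w. fd (pd i (c j h)) x w
      - (\<Sum>m\<in>UNIV. Gam m i j x * fd (c m h) x w + fd (Gam m i j) x w * c m h x)
      - (\<Sum>m\<in>UNIV. Gam m i h x * fd (c j m) x w + fd (Gam m i h) x w * c j m x))) (at x)"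
    unfolding cov_c_fun
    by (intro has_derivative_diff has_derivative_sum has_derivative_mult hG hC hpC)
  from pd_hasd[OF this] show ?thesis
    unfolding adC_def pd_def by (simp add: add.commute)
qed

lemma cov2_eq: "cov2_c Gam c l i j h x = acov2 GG dGG ccc dcc ddcc l i j h"
  unfolding cov2_c_def acov2_def pd_cov_c aC_eq ..

lemma schwarz_c: "ddcc l i j h = ddcc i l j h"
  unfolding pd_def[abs_def] using schwarz[OF U C x] by metis


lemma hGvec: "((\<lambda>y. \<chi> m. Gam m i j y) has_derivative fd (\<lambda>y. \<chi> m. Gam m i j y) x) (at x)"
  by (rule cinf_hasd[OF U cinf_vec[OF U G] x])

lemma fd_chi_G: "fd (\<lambda>y. \<chi> m. Gam m i j y) x w $ m = fd (Gam m i j) x w"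
proof -
  have "((\<lambda>y. (\<chi> m. Gam m i j y) $ m) has_derivative (\<lambda>w. fd (\<lambda>y. \<chi> m. Gam m i j y) x w $ m)) (at x)"
    by (rule hasd_nth[OF hGvec])
  then have "(Gam m i j has_derivative (\<lambda>w. fd (\<lambda>y. \<chi> m. Gam m i j y) x w $ m)) (at x)" by simp
  from fun_cong[OF frechet_derivative_at[OF this], of w] show ?thesis by simp
qed

lemma Rc_eq: "Rc Gam l i j m x = aRc GG dGG l i j m"
  unfolding Rc_RM RM_def baseG_axis
  by (simp add: fd_chi_G baseG_axis1 aRc_def pd_def mult.commute)

lemma Acoef_eq: "Acoef Gam c i j h x = aA GG ccc dcc i j h"
  unfolding Acoef_def aA_def aC_eq ..

lemma hcov: "(cov_c Gam c i j h has_derivative fd (cov_c Gam c i j h) x) (at x)"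
  by (rule cinf_hasd[OF U cinf_cov_c[OF U G C] x])

lemma pd_Acoef: "pd l (Acoef Gam c i j h) x = adA GG dGG ccc dcc ddcc l i j h"
proof -
  have "((\<lambda>y. cov_c Gam c i j h y + cov_c Gam c j i h y - cov_c Gam c h i j y) has_derivative
     (\<lambda>w. fd (cov_c Gam c i j h) x w + fd (cov_c Gam c j i h) x w - fd (cov_c Gam c h i j) x w)) (at x)"
    by (intro has_derivative_diff has_derivative_add hcov)
  from bounded_linear.has_derivative[OF bounded_linear_divide[of 2] this]
  have "(Acoef Gam c i j h has_derivative
     (\<lambda>w. (fd (cov_c Gam c i j h) x w + fd (cov_c Gam c j i h) x w - fd (cov_c Gam c h i j) x w) / 2)) (at x)"
    unfolding Acoef_def[abs_def] .
  from pd_hasd[OF this] show ?thesis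
    unfolding adA_def pd_cov_c[symmetric] by (simp add: pd_def)
qed

lemma hAc: "(Acoef Gam c i j h has_derivative fd (Acoef Gam c i j h) x) (at x)"
  by (rule cinf_hasd[OF U _ x]) (unfold Acoef_def[abs_def], intro cinf_divc cinf_add cinf_minus cinf_cov_c U G C)

lemma fd_Am: "fd (\<lambda>y. Am Gam c y b d) x a $ h = (\<Sum>i\<in>UNIV. \<Sum>j\<in>UNIV. b $ i * d $ j * (\<Sum>l\<in>UNIV. a $ l * pd l (Acoef Gam c i j h) x))"
proof -
  have hA: "((\<lambda>y. Am Gam c y b d) has_derivative fd (\<lambda>y. Am Gam c y b d) x) (at x)"
    by (rule cinf_hasd[OF U cinf_Am[OF U G C] x])
  have "((\<lambda>y. Am Gam c y b d $ h) has_derivative (\<lambda>w. fd (\<lambda>y. Am Gam c y b d) x w $ h)) (at x)"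
    by (rule hasd_nth[OF hA])
  moreover have "((\<lambda>y. Am Gam c y b d $ h) has_derivative
      (\<lambda>w. \<Sum>i\<in>UNIV. \<Sum>j\<in>UNIV. b $ i * d $ j * fd (Acoef Gam c i j h) x w)) (at x)"
    unfolding Am_def by (simp, intro has_derivative_sum has_derivative_mult_right hAc)
  ultimately have "(\<lambda>w. fd (\<lambda>y. Am Gam c y b d) x w $ h) = (\<lambda>w. \<Sum>i\<in>UNIV. \<Sum>j\<in>UNIV. b $ i * d $ j * fd (Acoef Gam c i j h) x w)"
    by (rule has_derivative_unique)
  from fun_cong[OF this, of a]
  have "fd (\<lambda>y. Am Gam c y b d) x a $ h = (\<Sum>i\<in>UNIV. \<Sum>j\<in>UNIV. b $ i * d $ j * fd (Acoef Gam c i j h) x a)"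
    by simp
  also have "\<dots> = (\<Sum>i\<in>UNIV. \<Sum>j\<in>UNIV. b $ i * d $ j * (\<Sum>l\<in>UNIV. a $ l * pd l (Acoef Gam c i j h) x))"
  proof -
    have "\<And>i j. fd (Acoef Gam c i j h) x a = (\<Sum>l\<in>UNIV. a $ l * pd l (Acoef Gam c i j h) x)"
      unfolding pd_def by (rule fd_coord[OF hAc])
    then show ?thesis by simp
  qed
  finally show ?thesis .
qed


lemma BA_comp: "BA Gam c x a b d $ h = (\<Sum>l\<in>UNIV. \<Sum>i\<in>UNIV. \<Sum>j\<in>UNIV. a $ l * b $ i * d $ j * aBco GG dGG ccc dcc ddcc l i j h)"
proof -
  have t1: "fd (\<lambda>y. Am Gam c y b d) x a $ h = (\<Sum>l\<in>UNIV. \<Sum>i\<in>UNIV. \<Sum>j\<in>UNIV. a $ l * b $ i * d $ j * adA GG dGG ccc dcc ddcc l i j h)"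
    unfolding fd_Am LA[of "\<lambda>i. b $ i" "\<lambda>j. d $ j" "\<lambda>l. a $ l"] pd_Acoef ..
  have t1': "fd (\<lambda>y. Am Gam c y a d) x b $ h = (\<Sum>l\<in>UNIV. \<Sum>i\<in>UNIV. \<Sum>j\<in>UNIV. a $ l * b $ i * d $ j * adA GG dGG ccc dcc ddcc i l j h)"
    unfolding fd_Am LAs[of "\<lambda>i. a $ i" "\<lambda>j. d $ j" "\<lambda>l. b $ l"] pd_Acoef ..
  have t2: "Gs Gam x a (Am Gam c x b d) $ h = (\<Sum>l\<in>UNIV. \<Sum>i\<in>UNIV. \<Sum>j\<in>UNIV. a $ l * b $ i * d $ j * (\<Sum>m\<in>UNIV. aA GG ccc dcc i j m * GG m l h))"
    unfolding Gs_def Am_def vec_lambda_beta LB[of "\<lambda>l. a $ l" "\<lambda>i. b $ i" "\<lambda>j. d $ j"] Acoef_eq ..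
  have t2': "Gs Gam x b (Am Gam c x a d) $ h = (\<Sum>l\<in>UNIV. \<Sum>i\<in>UNIV. \<Sum>j\<in>UNIV. a $ l * b $ i * d $ j * (\<Sum>m\<in>UNIV. aA GG ccc dcc l j m * GG m i h))"
    unfolding Gs_def Am_def vec_lambda_beta LBs[of "\<lambda>l. b $ l" "\<lambda>i. a $ i" "\<lambda>j. d $ j"] Acoef_eq ..
  have t3: "Am Gam c x a (baseG Gam x b d) $ h = (\<Sum>l\<in>UNIV. \<Sum>i\<in>UNIV. \<Sum>j\<in>UNIV. a $ l * b $ i * d $ j * (\<Sum>m\<in>UNIV. GG m i j * aA GG ccc dcc l m h))"
    unfolding baseG_def Am_def vec_lambda_beta LB[of "\<lambda>l. a $ l" "\<lambda>i. b $ i" "\<lambda>j. d $ j"] Acoef_eq ..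
  have t3': "Am Gam c x b (baseG Gam x a d) $ h = (\<Sum>l\<in>UNIV. \<Sum>i\<in>UNIV. \<Sum>j\<in>UNIV. a $ l * b $ i * d $ j * (\<Sum>m\<in>UNIV. GG m l j * aA GG ccc dcc i m h))"
    unfolding baseG_def Am_def vec_lambda_beta LBs[of "\<lambda>l. b $ l" "\<lambda>i. a $ i" "\<lambda>j. d $ j"] Acoef_eq ..
  show ?thesis
    unfolding BA_def vector_minus_component vector_add_component t1 t1' t2 t2' t3 t3' comb6 aBco_def ..
qed

lemma BA_zero:
  assumes tor: "\<And>h i j. Gam h i j x = Gam h j i x"
    and hyp: "\<And>i j k h. (cov2_c Gam c i k j h x - cov2_c Gam c i h j k x)
      - (cov2_c Gam c j k i h x - cov2_c Gam c j h i k x)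
      - (\<Sum>m\<in>UNIV. Rc Gam i j k m x * c m h x)
      - (\<Sum>m\<in>UNIV. Rc Gam i j h m x * c k m x) = 0"
  shows "BA Gam c x a b d = 0"
proof -
  have z: "aBco GG dGG ccc dcc ddcc l i j h = 0" for l i j h
  proof -
    have hy: "(cov2_c Gam c l j i h x - cov2_c Gam c l h i j x) - (cov2_c Gam c i j l h x - cov2_c Gam c i h l j x)
      - (\<Sum>m\<in>UNIV. Rc Gam l i j m x * c m h x) - (\<Sum>m\<in>UNIV. Rc Gam l i h m x * c j m x) = 0"
      by (rule hyp)
    show ?thesis
      by (rule alg3[OF tor schwarz_c]) (use hy in \<open>simp only: cov2_eq Rc_eq\<close>)
  qed
  show ?thesis by (simp add: vec_eq_iff BA_comp z)
qed

end

definition vc :: "('n::finite \<Rightarrow> 'n \<Rightarrow> 'n \<Rightarrow> real^'n \<Rightarrow> real) \<Rightarrow> (real^'n) \<times> (real^'n) \<Rightarrow> (real^'n) \<times> (real^'n) \<Rightarrow> real^'n" where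
  "vc Gam q y = (\<chi> j. vcv Gam q y j)"

lemma vc_Phi: "vc Gam q (Phi Gam q h v) = v"
  unfolding vc_def vcv_Phi by simp

lemma Phi_vc: "Phi Gam q (fst y) (vc Gam q y) = y"
  unfolding vc_def by (rule Phi_recon)

lemma Phi_diff4: "Phi Gam q a b - Phi Gam q c d - Phi Gam q e f - Phi Gam q g k = Phi Gam q (a - c - e - g) (b - d - f - k)"
  by (simp add: Phi_diff)

theorem theorem2:
  fixes U :: "(real^'n::finite) set"
    and Gam :: "'n \<Rightarrow> 'n \<Rightarrow> 'n \<Rightarrow> real^'n \<Rightarrow> real"
    and c :: "'n \<Rightarrow> 'n \<Rightarrow> real^'n \<Rightarrow> real"
  assumes "open U"
    and "\<And>h i j. cinf_on U (Gam h i j)"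
    and "\<And>i j. cinf_on U (c i j)"
    and torsion_free: "\<And>h i j x. x \<in> U \<Longrightarrow> Gam h i j x = Gam h j i x"
    and c_sym: "\<And>i j x. x \<in> U \<Longrightarrow> c i j x = c j i x"
    and hyp: "\<And>i j k h x. x \<in> U \<Longrightarrow>
        (cov2_c Gam c i k j h x - cov2_c Gam c i h j k x)
      - (cov2_c Gam c j k i h x - cov2_c Gam c j h i k x)
      - (\<Sum>m\<in>UNIV. Rc Gam i j k m x * c m h x)
      - (\<Sum>m\<in>UNIV. Rc Gam i j h m x * c k m x) = 0"
  shows "semi_symmetric (cot_conn Gam c) (U \<times> UNIV) \<longleftrightarrow> semi_symmetric (base_conn Gam) U"
proof -
  note U = assms(1) and G = assms(2) and C = assms(3)
  have T: "open (U \<times> (UNIV::(real^'n) set))" by (rule open_Times[OF U open_UNIV])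
  let ?K = "\<lambda>q. Kf (\<lambda>a b q. RT Gam c q a b) q"
  have Kphi: "?K q (Phi Gam q h1 v1) (Phi Gam q h2 v2) (Phi Gam q h3 v3)
     = Phi Gam q (RM Gam (fst q) h1 h2 h3) (RS Gam (fst q) h1 h2 v3)"
    if q: "q \<in> U \<times> UNIV" for q h1 v1 h2 v2 h3 v3
  proof -
    have x: "fst q \<in> U" using q by auto
    have "BA Gam c (fst q) h1 h2 h3 = 0"
      by (rule BA_zero[OF U G C x torsion_free[OF x] hyp[OF x]])
    then show ?thesis using Kf_cot_Phi[OF U G C q] by simp
  qed
  have Kany: "?K q y1 y2 y3 = Phi Gam q (RM Gam (fst q) (fst y1) (fst y2) (fst y3)) (RS Gam (fst q) (fst y1) (fst y2) (vc Gam q y3))"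
    if q: "q \<in> U \<times> UNIV" for q y1 y2 y3
    using Kphi[OF q, of "fst y1" "vc Gam q y1" "fst y2" "vc Gam q y2" "fst y3" "vc Gam q y3"] by (simp only: Phi_vc)
  have KKphi: "KK (?K q) y1 y2 y3 y4 y5 = Phi Gam q (KK (RM Gam (fst q)) (fst y1) (fst y2) (fst y3) (fst y4) (fst y5))
      (RS Gam (fst q) (fst y1) (fst y2) (RS Gam (fst q) (fst y3) (fst y4) (vc Gam q y5))
       - RS Gam (fst q) (RM Gam (fst q) (fst y1) (fst y2) (fst y3)) (fst y4) (vc Gam q y5)
       - RS Gam (fst q) (fst y3) (RM Gam (fst q) (fst y1) (fst y2) (fst y4)) (vc Gam q y5)
       - RS Gam (fst q) (fst y3) (fst y4) (RS Gam (fst q) (fst y1) (fst y2) (vc Gam q y5)))"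
    if q: "q \<in> U \<times> UNIV" for q y1 y2 y3 y4 y5
    unfolding KK_def Kany[OF q] Phi_fst vc_Phi Phi_diff4 ..
  have lhs: "semi_symmetric (cot_conn Gam c) (U \<times> UNIV) \<longleftrightarrow> (\<forall>q\<in>U \<times> UNIV. \<forall>y1 y2 y3 y4 y5. KK (?K q) y1 y2 y3 y4 y5 = 0)"
    by (rule semi_sym_iff[OF T cinf_RT[OF U G C] agrees_cot[OF U G]])
  have rhs: "semi_symmetric (base_conn Gam) U \<longleftrightarrow> (\<forall>x\<in>U. \<forall>a b c d e. KK (RM Gam x) a b c d e = 0)"
    by (rule base_semi_sym[OF U G])
  show ?thesis
    unfolding lhs rhs
  proof
    assume A: "\<forall>q\<in>U \<times> UNIV. \<forall>y1 y2 y3 y4 y5. KK (?K q) y1 y2 y3 y4 y5 = 0"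
    show "\<forall>x\<in>U. \<forall>a b c d e. KK (RM Gam x) a b c d e = 0"
    proof (intro ballI allI)
      fix x a b d e f assume x: "x \<in> U"
      let ?q = "(x, 0::real^'n)"
      have q: "?q \<in> U \<times> UNIV" using x by simp
      have "KK (?K ?q) (Phi Gam ?q a 0) (Phi Gam ?q b 0) (Phi Gam ?q d 0) (Phi Gam ?q e 0) (Phi Gam ?q f 0) = 0"
        using A q by blast
      then show "KK (RM Gam x) a b d e f = 0"
        unfolding KKphi[OF q] Phi_eq_zero Phi_fst by simp
    qed
  next
    assume B: "\<forall>x\<in>U. \<forall>a b c d e. KK (RM Gam x) a b c d e = 0"
    show "\<forall>q\<in>U \<times> UNIV. \<forall>y1 y2 y3 y4 y5. KK (?K q) y1 y2 y3 y4 y5 = 0"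
    proof (intro ballI allI)
      fix q :: "(real^'n) \<times> (real^'n)" and y1 y2 y3 y4 y5 :: "(real^'n) \<times> (real^'n)" assume q: "q \<in> U \<times> UNIV"
      have x: "fst q \<in> U" using q by auto
      let ?x = "fst q"
      let ?R = "RM Gam ?x" and ?S = "RS Gam ?x"
      let ?h1 = "fst y1" and ?h2 = "fst y2" and ?h3 = "fst y3" and ?h4 = "fst y4" and ?v = "vc Gam q y5"
      define V where "V = ?S ?h1 ?h2 (?S ?h3 ?h4 ?v) - ?S (?R ?h1 ?h2 ?h3) ?h4 ?v - ?S ?h3 (?R ?h1 ?h2 ?h4) ?v - ?S ?h3 ?h4 (?S ?h1 ?h2 ?v)"
      have adj: "\<And>a b v u. ?S a b v \<bullet> u = - (v \<bullet> ?R a b u)" by (rule RS_adj[OF U G x])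
      have Vu: "V \<bullet> u = - (?v \<bullet> KK ?R ?h1 ?h2 ?h3 ?h4 u)" for u
        unfolding V_def KK_def by (simp add: inner_diff_left inner_diff_right adj)
      have "V \<bullet> V = 0" using Vu[of V] B x by simp
      then have V0: "V = 0" by simp
      show "KK (?K q) y1 y2 y3 y4 y5 = 0"
        unfolding KKphi[OF q] V_def[symmetric] V0 using B x by (simp add: Phi_zero)
    qed
  qed
qed

end
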